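(* Let $p,q\ge 1$ be integers with $p+q\ge 3$. Then: (i) $\mathbb{O}_{p,q}\simeq\mathbb{O}_{q,p}$ as graded algebras; (ii) $\mathbb{O}_{p,q+4}\simeq\mathbb{O}_{p+4,q}$ as graded algebras; (iii) every isomorphism preserving the structure of $\mathbb{Z}_2^n$-graded algebra between algebras $\mathbb{O}_{p,q}$ and $\mathbb{O}_{p',q'}$ (with $p,q,p',q'\ge 1$, $p+q=p'+q'=n$) is a combination of the isomorphisms in (i) and (ii); that is, such an isomorphism exists only if $(p',q')$ can be obtained from $(p,q)$ by finitely many applications of the isomorphisms in (i) and (ii); (iv) for $n\ge 5$, there is no isomorphism preserving the structure of $\mathbb{Z}_2^n$-graded algebra between $\mathbb{O}_{n,0}$ and $\mathbb{O}_{0,n}$, nor between either of them and any $\mathbb{O}_{p,q}$ with $p+q=n$, $(p,q)\notin\{(n,0),(0,n)\}$.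
   Context: $\mathbb{Z}_2=\{0,1\}$ is the field of two elements. For $f:\mathbb{Z}_2^n\times\mathbb{Z}_2^n\to\mathbb{Z}_2$, the twisted group algebra $(\mathbb{R}[\mathbb{Z}_2^n],f)$ is the real vector space with basis $\{u_x: x\in\mathbb{Z}_2^n\}$ and bilinear product $u_x\cdot u_y=(-1)^{f(x,y)}u_{x+y}$. For integers $p,q\ge0$ with $n=p+q\ge3$, $\mathbb{O}_{p,q}$ is the twisted group algebra with $f(x,y)=\sum_{1\le i<j<k\le n}(x_ix_jy_k+x_iy_jx_k+y_ix_jx_k)+\sum_{1\le i\le j\le n}x_iy_j+\sum_{1\le i\le p}x_iy_i$. An element is homogeneous if it is a scalar multiple of some $u_x$. An isomorphism preserving the structure of $\mathbb{Z}_2^n$-graded algebra (a graded isomorphism) between $\mathbb{O}_{p,q}$ and $\mathbb{O}_{p',q'}$, $p+q=p'+q'=n$, is a real algebra isomorphism sending homogeneous elements to homogeneous elements; "$\simeq$ as graded algebras" means such an isomorphism exists. *)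

theory Defs
  imports Complex_Main
begin

text \<open>Z_2^n is modelled as the subsets of {..<n} (x_i = 1 iff i \<in> x, indices 0-based);
addition in Z_2^n is symmetric difference.  An element of the twisted group algebra
is its coefficient function w.r.t. the basis u_x, supported on Pow {..<n}.\<close>

definition zadd :: "nat set \<Rightarrow> nat set \<Rightarrow> nat set" where
  "zadd x y = (x - y) \<union> (y - x)"

definition bit :: "nat set \<Rightarrow> nat \<Rightarrow> nat" where
  "bit x i = (if i \<in> x then 1 else 0)"

text \<open>The twisting function f of O_{p,q}, with n = p + q (indices shifted to 0..n-1).\<close>
definition fO :: "nat \<Rightarrow> nat \<Rightarrow> nat set \<Rightarrow> nat set \<Rightarrow> nat" where
  "fO p q x y = (let n = p + q in
     (\<Sum>i<n. \<Sum>j<n. \<Sum>k<n. if i < j \<and> j < k then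
         bit x i * bit x j * bit y k + bit x i * bit y j * bit x k + bit y i * bit x j * bit x k
       else 0)
     + (\<Sum>i<n. \<Sum>j<n. if i \<le> j then bit x i * bit y j else 0)
     + (\<Sum>i<p. bit x i * bit y i))"

definition alg_carrier :: "nat \<Rightarrow> (nat set \<Rightarrow> real) set" where
  "alg_carrier n = {a. \<forall>x. \<not> x \<subseteq> {..<n} \<longrightarrow> a x = 0}"

definition ubasis :: "nat set \<Rightarrow> nat set \<Rightarrow> real" where
  "ubasis x = (\<lambda>z. if z = x then 1 else 0)"

definition omult :: "nat \<Rightarrow> nat \<Rightarrow> (nat set \<Rightarrow> real) \<Rightarrow> (nat set \<Rightarrow> real) \<Rightarrow> (nat set \<Rightarrow> real)" where
  "omult p q a b = (\<lambda>z. \<Sum>x\<in>Pow {..<p+q}. \<Sum>y\<in>Pow {..<p+q}.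
      if zadd x y = z then (-1) ^ fO p q x y * a x * b y else 0)"

definition homogeneous :: "nat \<Rightarrow> (nat set \<Rightarrow> real) \<Rightarrow> bool" where
  "homogeneous n a \<longleftrightarrow> (\<exists>c x. x \<subseteq> {..<n} \<and> a = (\<lambda>z. c * ubasis x z))"

definition graded_iso :: "nat \<Rightarrow> nat \<Rightarrow> nat \<Rightarrow> nat \<Rightarrow> ((nat set \<Rightarrow> real) \<Rightarrow> (nat set \<Rightarrow> real)) \<Rightarrow> bool" where
  "graded_iso p q p' q' \<phi> \<longleftrightarrow>
     p + q = p' + q' \<and>
     bij_betw \<phi> (alg_carrier (p+q)) (alg_carrier (p'+q')) \<and>
     (\<forall>a\<in>alg_carrier (p+q). \<forall>b\<in>alg_carrier (p+q). \<phi> (\<lambda>z. a z + b z) = (\<lambda>z. \<phi> a z + \<phi> b z)) \<and>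
     (\<forall>c::real. \<forall>a\<in>alg_carrier (p+q). \<phi> (\<lambda>z. c * a z) = (\<lambda>z. c * \<phi> a z)) \<and>
     (\<forall>a\<in>alg_carrier (p+q). \<forall>b\<in>alg_carrier (p+q). \<phi> (omult p q a b) = omult p' q' (\<phi> a) (\<phi> b)) \<and>
     (\<forall>a\<in>alg_carrier (p+q). homogeneous (p+q) a \<longrightarrow> homogeneous (p'+q') (\<phi> a))"

definition graded_isomorphic :: "nat \<Rightarrow> nat \<Rightarrow> nat \<Rightarrow> nat \<Rightarrow> bool" where
  "graded_isomorphic p q p' q' \<longleftrightarrow> (\<exists>\<phi>. graded_iso p q p' q' \<phi>)"

text \<open>One application of an isomorphism of type (i) or (ii) (either direction),
between algebras O_{a,b}, O_{c,d} with all indices \<ge> 1.\<close>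
definition oct_move :: "nat \<times> nat \<Rightarrow> nat \<times> nat \<Rightarrow> bool" where
  "oct_move ab cd \<longleftrightarrow> (case ab of (a, b) \<Rightarrow> a \<ge> 1 \<and> b \<ge> 1 \<and>
      (cd = (b, a) \<or> (b \<ge> 5 \<and> cd = (a + 4, b - 4)) \<or> (a \<ge> 5 \<and> cd = (a - 4, b + 4))))"

end

theory Submission
  imports Defs
begin


definition o1 :: "nat set \<Rightarrow> bool" where "o1 A = odd (card A)"
definition o2 :: "nat set \<Rightarrow> bool" where "o2 A = odd (card A choose 2)"

lemma choose2_Suc: "Suc m choose 2 = (m choose 2) + m"
  by (simp add: numeral_2_eq_2)

lemma choose2_add: "(a + b) choose 2 = (a choose 2) + (b choose 2) + a * b"
  by (induction b) (simp_all add: choose2_Suc)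

lemma card_Int_lessThan_Suc:
  "card (x \<inter> {..<Suc m}) = card (x \<inter> {..<m}) + bit x m"
  by (simp add: lessThan_Suc bit_def)

lemma sum_bit: "(\<Sum>i<m. bit x i) = card (x \<inter> {..<m})"
  by (induction m) (simp_all add: card_Int_lessThan_Suc)

lemma bit_Int: "bit (x \<inter> y) i = bit x i * bit y i"
  by (simp add: bit_def)

lemma bit_01: "bit x i = 0 \<or> bit x i = 1" by (simp add: bit_def)
lemma bit_sq: "bit x i * bit x i = bit x i" by (simp add: bit_def)

definition A2 :: "nat \<Rightarrow> nat set \<Rightarrow> nat" where
  "A2 m x = (\<Sum>i<m. \<Sum>j<m. if i < j then bit x i * bit x j else 0)"

definition C2 :: "nat \<Rightarrow> nat set \<Rightarrow> nat set \<Rightarrow> nat" where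
  "C2 m x y = (\<Sum>i<m. \<Sum>j<m. if i < j then bit x i * bit y j + bit y i * bit x j else 0)"

lemma A2_Suc: "A2 (Suc m) x = A2 m x + bit x m * card (x \<inter> {..<m})"
proof -
  have "A2 (Suc m) x = A2 m x + (\<Sum>i<m. bit x i * bit x m)"
    by (simp add: A2_def sum.distrib)
  also have "(\<Sum>i<m. bit x i * bit x m) = bit x m * card (x \<inter> {..<m})"
    by (simp add: sum_distrib_right[symmetric] sum_bit)
  finally show ?thesis .
qed

lemma A2_eq: "A2 m x = card (x \<inter> {..<m}) choose 2"
  by (induction m) (auto simp: A2_def[of 0] A2_Suc card_Int_lessThan_Suc choose2_Suc bit_def)

lemma C2_Suc: "C2 (Suc m) x y = C2 m x y + bit y m * card (x \<inter> {..<m}) + bit x m * card (y \<inter> {..<m})"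
proof -
  have "C2 (Suc m) x y = C2 m x y + (\<Sum>i<m. bit x i * bit y m + bit y i * bit x m)"
    by (simp add: C2_def sum.distrib)
  also have "(\<Sum>i<m. bit x i * bit y m + bit y i * bit x m) = bit y m * card (x \<inter> {..<m}) + bit x m * card (y \<inter> {..<m})"
    by (simp add: sum.distrib sum_distrib_left[symmetric] sum_distrib_right[symmetric] sum_bit mult.commute)
  finally show ?thesis by simp
qed

lemma C2_eq: "C2 m x y + card (x \<inter> y \<inter> {..<m}) = card (x \<inter> {..<m}) * card (y \<inter> {..<m})"
proof (induction m)
  case 0 then show ?case by (simp add: C2_def)
next
  case (Suc m)
  have e: "card (x \<inter> y \<inter> {..<Suc m}) = card (x \<inter> y \<inter> {..<m}) + bit x m * bit y m"
    using card_Int_lessThan_Suc[of "x \<inter> y" m] by (simp add: bit_Int)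
  show ?case using Suc.IH
    by (simp add: C2_Suc card_Int_lessThan_Suc algebra_simps bit_sq bit_Int)
qed

definition T3 :: "nat \<Rightarrow> nat set \<Rightarrow> nat set \<Rightarrow> nat" where
  "T3 m x y = (\<Sum>i<m. \<Sum>j<m. \<Sum>k<m. if i < j \<and> j < k then
         bit x i * bit x j * bit y k + bit x i * bit y j * bit x k + bit y i * bit x j * bit x k
       else 0)"

definition Ls :: "nat \<Rightarrow> nat set \<Rightarrow> nat set \<Rightarrow> nat" where
  "Ls m x y = (\<Sum>i<m. \<Sum>j<m. if i \<le> j then bit x i * bit y j else 0)"

lemma fO_split: "fO p q x y = T3 (p+q) x y + Ls (p+q) x y + card (x \<inter> y \<inter> {..<p})"
proof -
  have "(\<Sum>i<p. bit x i * bit y i) = card (x \<inter> y \<inter> {..<p})"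
    by (simp add: bit_Int[symmetric] sum_bit)
  then show ?thesis by (simp add: fO_def T3_def Ls_def Let_def)
qed

lemma T3_Suc: "T3 (Suc m) x y = T3 m x y + bit y m * A2 m x + bit x m * C2 m x y"
proof -
  have "T3 (Suc m) x y = T3 m x y + (\<Sum>i<m. \<Sum>j<m. if i < j then
         bit x i * bit x j * bit y m + bit x i * bit y j * bit x m + bit y i * bit x j * bit x m else 0)"
    by (simp add: T3_def sum.distrib)
  also have "(\<Sum>i<m. \<Sum>j<m. if i < j then
         bit x i * bit x j * bit y m + bit x i * bit y j * bit x m + bit y i * bit x j * bit x m else 0)
     = (\<Sum>i<m. \<Sum>j<m. bit y m * (if i < j then bit x i * bit x j else 0)
          + bit x m * (if i < j then bit x i * bit y j + bit y i * bit x j else 0))"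
    by (intro sum.cong refl) (simp add: algebra_simps)
  also have "\<dots> = bit y m * A2 m x + bit x m * C2 m x y"
    by (simp add: A2_def C2_def sum.distrib sum_distrib_left)
  finally show ?thesis by simp
qed

lemma T3_parity: "odd (T3 m x y) \<longleftrightarrow>
   ((odd (card (x \<inter> {..<m}) choose 2) \<and> odd (card (y \<inter> {..<m}))) \<noteq>
    (even (card (x \<inter> {..<m})) \<and> odd (card (x \<inter> y \<inter> {..<m}))))"
proof (induction m)
  case 0 then show ?case by (simp add: T3_def)
next
  case (Suc m)
  define a where "a = card (x \<inter> {..<m})"
  define b where "b = card (y \<inter> {..<m})"
  define c where "c = card (x \<inter> y \<inter> {..<m})"
  define C where "C = C2 m x y"
  have hC: "C + c = a * b" using C2_eq[of m x y] by (simp add: a_def b_def c_def C_def)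
  have hA: "A2 m x = a choose 2" by (simp add: A2_eq a_def)
  have e: "card (x \<inter> y \<inter> {..<Suc m}) = c + bit x m * bit y m"
    using card_Int_lessThan_Suc[of "x \<inter> y" m] by (simp add: bit_Int c_def)
  have pC: "odd C \<longleftrightarrow> (odd (a*b) \<noteq> odd c)" using hC
    by (metis even_add)
  have s1: "card (x \<inter> {..<Suc m}) = a + bit x m" by (simp add: card_Int_lessThan_Suc a_def)
  have s2: "card (y \<inter> {..<Suc m}) = b + bit y m" by (simp add: card_Int_lessThan_Suc b_def)
  have IH: "odd (T3 m x y) \<longleftrightarrow> ((odd (a choose 2) \<and> odd b) \<noteq> (even a \<and> odd c))"
    using Suc.IH by (simp add: a_def b_def c_def)
  have T: "T3 (Suc m) x y = T3 m x y + bit y m * (a choose 2) + bit x m * C"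
    by (simp add: T3_Suc hA C_def)
  have key: "odd (T3 (Suc m) x y) \<longleftrightarrow> ((odd ((a + bit x m) choose 2) \<and> odd (b + bit y m)) \<noteq> (even (a + bit x m) \<and> odd (c + bit x m * bit y m)))"
  proof (cases "bit x m = 0"; cases "bit y m = 0")
    assume "bit x m = 0" "bit y m = 0" then show ?thesis using IH T by auto
  next
    assume "bit x m = 0" "bit y m \<noteq> 0" then have "bit y m = 1" using bit_01 by metis
    then show ?thesis using IH T \<open>bit x m = 0\<close> by auto
  next
    assume "bit x m \<noteq> 0" "bit y m = 0" then have "bit x m = 1" using bit_01 by metis
    then show ?thesis using IH T pC \<open>bit y m = 0\<close> by (auto simp add: choose2_add choose2_Suc)
  next
    assume "bit x m \<noteq> 0" "bit y m \<noteq> 0" then have "bit x m = 1" "bit y m = 1" using bit_01 by metis+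
    then show ?thesis using IH T pC by (auto simp add: choose2_add choose2_Suc)
  qed
  show ?case using key s1 s2 e by simp
qed

definition Lr :: "nat set \<Rightarrow> nat set \<Rightarrow> nat" where
  "Lr A B = card {(i,j). i \<in> A \<and> j \<in> B \<and> i \<le> j}"

lemma Ls_Lr:
  assumes "x \<subseteq> {..<m}" "y \<subseteq> {..<m}"
  shows "Ls m x y = Lr x y"
proof -
  let ?S = "{(i,j). i \<in> x \<and> j \<in> y \<and> i \<le> j}"
  have sub: "?S \<subseteq> {..<m} \<times> {..<m}" using assms by auto
  have "Lr x y = card ({..<m} \<times> {..<m} \<inter> ?S)" unfolding Lr_def using sub
    by (simp add: Int_absorb1)
  also have "\<dots> = (\<Sum>z\<in>{..<m} \<times> {..<m}. if z \<in> ?S then 1 else 0)"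
    by (simp add: sum.If_cases)
  also have "\<dots> = (\<Sum>i<m. \<Sum>j<m. if (i,j) \<in> ?S then 1 else 0)"
    unfolding sum.cartesian_product by (intro sum.cong refl) (auto split: prod.split)
  also have "\<dots> = Ls m x y" unfolding Ls_def
    by (intro sum.cong refl) (simp add: bit_def)
  finally show ?thesis by simp
qed

lemma card_split: "finite A \<Longrightarrow> card A = card (A - B) + card (A \<inter> B)"
proof -
  assume f: "finite A"
  have "A = (A - B) \<union> (A \<inter> B)" by auto
  then have "card A = card ((A - B) \<union> (A \<inter> B))" by simp
  also have "\<dots> = card (A - B) + card (A \<inter> B)"
    by (rule card_Un_disjoint) (use f in auto)
  finally show ?thesis .
qed

lemma symdiff_parity:
  fixes X Y :: "'a set"
  assumes "finite X" "finite Y"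
  shows "odd (card ((X - Y) \<union> (Y - X))) = (odd (card X) \<noteq> odd (card Y))"
proof -
  have c: "card ((X - Y) \<union> (Y - X)) = card (X - Y) + card (Y - X)"
    by (rule card_Un_disjoint) (use assms in auto)
  have "card ((X - Y) \<union> (Y - X)) + 2 * card (X \<inter> Y) = card X + card Y"
    using card_split[OF assms(1), of Y] card_split[OF assms(2), of X] c by (simp add: Int_commute)
  then have "even (card ((X - Y) \<union> (Y - X)) + 2 * card (X \<inter> Y)) = even (card X + card Y)" by simp
  then show ?thesis by simp
qed

lemma card_zadd2: "finite A \<Longrightarrow> finite B \<Longrightarrow> card (zadd A B) = card (A - B) + card (B - A)"
  unfolding zadd_def by (rule card_Un_disjoint) auto

lemma o1_zadd: "finite A \<Longrightarrow> finite B \<Longrightarrow> o1 (zadd A B) = (o1 A \<noteq> o1 B)"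
  unfolding o1_def zadd_def by (rule symdiff_parity)

lemma o2_zadd: "finite A \<Longrightarrow> finite B \<Longrightarrow>
   o2 (zadd A B) = (((o2 A \<noteq> o2 B) \<noteq> (o1 A \<and> o1 B)) \<noteq> o1 (A \<inter> B))"
proof -
  assume f: "finite A" "finite B"
  define u where "u = card (A - B)"
  define w where "w = card (B - A)"
  define c where "c = card (A \<inter> B)"
  have a: "card A = u + c" unfolding u_def c_def using f card_split by blast
  have b: "card B = w + c" unfolding w_def c_def using f card_split[of B A] by (simp add: Int_commute)
  have z: "card (zadd A B) = u + w" using card_zadd2[OF f] by (simp add: u_def w_def)
  show ?thesis unfolding o2_def o1_def a b z c_def[symmetric]
    by (auto simp add: choose2_add)
qed

lemma o1_image: "inj_on f A \<Longrightarrow> o1 (f ` A) = o1 A"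
  by (simp add: o1_def card_image)
lemma o2_image: "inj_on f A \<Longrightarrow> o2 (f ` A) = o2 A"
  by (simp add: o2_def card_image)

lemma Lr_swap_sum:
  assumes "finite A" "finite B"
  shows "Lr A B + Lr B A = card A * card B + card (A \<inter> B)"
proof -
  let ?X = "{(i,j). i \<in> A \<and> j \<in> B \<and> i \<le> j}"
  let ?Y = "{(i,j). i \<in> A \<and> j \<in> B \<and> j \<le> i}"
  have "Lr B A = card ((\<lambda>(i,j). (j,i)) ` ?Y)" unfolding Lr_def
    by (intro arg_cong[where f=card]) auto
  also have "\<dots> = card ?Y" by (intro card_image) (auto simp: inj_on_def)
  finally have LB: "Lr B A = card ?Y" .
  have fin: "finite ?X" "finite ?Y"
    by (rule finite_subset[of _ "A \<times> B"], auto simp: assms)+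
  have U: "?X \<union> ?Y = A \<times> B" by auto
  have I: "?X \<inter> ?Y = (\<lambda>i. (i,i)) ` (A \<inter> B)" by auto
  have "card (?X \<union> ?Y) + card (?X \<inter> ?Y) = card ?X + card ?Y"
    by (rule card_Un_Int[OF fin, symmetric])
  moreover have "card (?X \<inter> ?Y) = card (A \<inter> B)" unfolding I
    by (intro card_image) (auto simp: inj_on_def)
  ultimately show ?thesis using LB unfolding U Lr_def by (simp add: card_cartesian_product)
qed

lemma Lr_fin: "finite A \<Longrightarrow> finite B \<Longrightarrow> finite {(i,j). i \<in> A \<and> j \<in> B \<and> i \<le> j}"
  by (rule finite_subset[of _ "A \<times> B"]) auto

lemma Lr_zadd1:
  assumes "finite A" "finite A'" "finite B"
  shows "odd (Lr (zadd A A') B) = (odd (Lr A B) \<noteq> odd (Lr A' B))"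
proof -
  have e: "{(i,j). i \<in> zadd A A' \<and> j \<in> B \<and> i \<le> j} =
      ({(i,j). i \<in> A \<and> j \<in> B \<and> i \<le> j} - {(i,j). i \<in> A' \<and> j \<in> B \<and> i \<le> j}) \<union>
      ({(i,j). i \<in> A' \<and> j \<in> B \<and> i \<le> j} - {(i,j). i \<in> A \<and> j \<in> B \<and> i \<le> j})"
    by (auto simp: zadd_def)
  show ?thesis unfolding Lr_def e
    by (rule symdiff_parity[OF Lr_fin[OF assms(1,3)] Lr_fin[OF assms(2,3)]])
qed

lemma Lr_zadd2:
  assumes "finite A" "finite B" "finite B'"
  shows "odd (Lr A (zadd B B')) = (odd (Lr A B) \<noteq> odd (Lr A B'))"
proof -
  have e: "{(i,j). i \<in> A \<and> j \<in> zadd B B' \<and> i \<le> j} =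
      ({(i,j). i \<in> A \<and> j \<in> B \<and> i \<le> j} - {(i,j). i \<in> A \<and> j \<in> B' \<and> i \<le> j}) \<union>
      ({(i,j). i \<in> A \<and> j \<in> B' \<and> i \<le> j} - {(i,j). i \<in> A \<and> j \<in> B \<and> i \<le> j})"
    by (auto simp: zadd_def)
  show ?thesis unfolding Lr_def e
    by (rule symdiff_parity[OF Lr_fin[OF assms(1,2)] Lr_fin[OF assms(1,3)]])
qed

lemma Lr_rev:
  assumes "A \<subseteq> {..<n}" "B \<subseteq> {..<n}"
  shows "Lr ((\<lambda>k. n - 1 - k) ` A) ((\<lambda>k. n - 1 - k) ` B) = Lr B A"
proof -
  let ?r = "\<lambda>k. n - 1 - k"
  have "{(i,j). i \<in> ?r ` A \<and> j \<in> ?r ` B \<and> i \<le> j} =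
        (\<lambda>(i,j). (?r j, ?r i)) ` {(i,j). i \<in> B \<and> j \<in> A \<and> i \<le> j}"
  proof (rule set_eqI, rule iffI)
    fix z assume "z \<in> {(i,j). i \<in> ?r ` A \<and> j \<in> ?r ` B \<and> i \<le> j}"
    then obtain a b where z: "z = (?r a, ?r b)" "a \<in> A" "b \<in> B" "?r a \<le> ?r b" by auto
    then have "b \<le> a" using assms by auto
    then show "z \<in> (\<lambda>(i,j). (?r j, ?r i)) ` {(i,j). i \<in> B \<and> j \<in> A \<and> i \<le> j}"
      using z by (auto intro!: image_eqI[of _ _ "(b,a)"])
  next
    fix z assume "z \<in> (\<lambda>(i,j). (?r j, ?r i)) ` {(i,j). i \<in> B \<and> j \<in> A \<and> i \<le> j}"
    then obtain a b where z: "z = (?r a, ?r b)" "a \<in> A" "b \<in> B" "b \<le> a" by auto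
    then show "z \<in> {(i,j). i \<in> ?r ` A \<and> j \<in> ?r ` B \<and> i \<le> j}" using assms by auto
  qed
  moreover have "inj_on (\<lambda>(i,j). (?r j, ?r i)) {(i,j). i \<in> B \<and> j \<in> A \<and> i \<le> j}"
  proof (rule inj_onI, clarsimp)
    fix a b c d assume h: "a \<in> B" "b \<in> A" "c \<in> B" "d \<in> A"
      "n - Suc b = n - Suc d" "n - Suc a = n - Suc c"
    then have "a < n" "b < n" "c < n" "d < n" using assms by auto
    then show "a = c \<and> b = d" using h(5,6) by arith
  qed
  ultimately show ?thesis unfolding Lr_def by (simp add: card_image)
qed



lemma fO_parity:
  assumes "x \<subseteq> {..<p+q}" "y \<subseteq> {..<p+q}"
  shows "odd (fO p q x y) = ((((o2 x \<and> o1 y) \<noteq> (\<not> o1 x \<and> o1 (x \<inter> y))) \<noteq> odd (Lr x y)) \<noteq> o1 (x \<inter> y \<inter> {..<p}))"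
proof -
  have ex: "x \<inter> {..<p+q} = x" "y \<inter> {..<p+q} = y" "x \<inter> y \<inter> {..<p+q} = x \<inter> y" using assms by auto
  show ?thesis using T3_parity[of "p+q" x y] Ls_Lr[OF assms]
    unfolding fO_split ex o1_def o2_def by auto
qed

lemma zadd_sub: "x \<subseteq> A \<Longrightarrow> y \<subseteq> A \<Longrightarrow> zadd x y \<subseteq> A"
  by (auto simp: zadd_def)

lemma zadd_self: "zadd x x = {}" by (auto simp: zadd_def)
lemma zadd_empty: "zadd x {} = x" "zadd {} x = x" by (auto simp: zadd_def)
lemma zadd_comm: "zadd x y = zadd y x" by (auto simp: zadd_def)
lemma zadd_assoc: "zadd (zadd x y) z = zadd x (zadd y z)" by (auto simp: zadd_def)

lemma sign_eq: "even (a + b) \<Longrightarrow> (-1::real)^a = (-1)^b"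
  by (simp add: minus_one_power_iff)

lemma sq_sign: "(-1::real)^k * ((-1)^k * c) = c"
  by (simp add: minus_one_power_iff)

lemma construct:
  fixes \<tau> :: "nat set \<Rightarrow> nat set" and s :: "nat set \<Rightarrow> nat"
  assumes n: "p + q = p' + q'"
    and bij: "bij_betw \<tau> (Pow {..<p+q}) (Pow {..<p+q})"
    and hom: "\<And>x y. x \<subseteq> {..<p+q} \<Longrightarrow> y \<subseteq> {..<p+q} \<Longrightarrow> \<tau> (zadd x y) = zadd (\<tau> x) (\<tau> y)"
    and sgn: "\<And>x y. x \<subseteq> {..<p+q} \<Longrightarrow> y \<subseteq> {..<p+q} \<Longrightarrow>
        even (fO p' q' (\<tau> x) (\<tau> y) + fO p q x y + s x + s y + s (zadd x y))"
  shows "graded_isomorphic p q p' q'"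
proof -
  define U where "U = Pow {..<p+q}"
  define ti where "ti = the_inv_into U \<tau>"
  have bijU: "bij_betw \<tau> U U" using bij by (simp add: U_def)
  have ti1: "z \<in> U \<Longrightarrow> ti z \<in> U \<and> \<tau> (ti z) = z" for z
    unfolding ti_def using bijU
    by (meson bij_betw_imp_surj_on bij_betw_the_inv_into bij_betw_apply f_the_inv_into_f_bij_betw)
  have ti2: "x \<in> U \<Longrightarrow> ti (\<tau> x) = x" for x
    unfolding ti_def using bijU by (simp add: bij_betw_def the_inv_into_f_f)
  have tU: "x \<in> U \<Longrightarrow> \<tau> x \<in> U" for x using bijU by (meson bij_betw_apply)
  have injt: "x \<in> U \<Longrightarrow> y \<in> U \<Longrightarrow> \<tau> x = \<tau> y \<longleftrightarrow> x = y" for x y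
    using bijU by (meson bij_betw_def inj_on_eq_iff)
  define \<phi> where "\<phi> a = (\<lambda>z. if z \<in> U then (-1::real)^(s (ti z)) * a (ti z) else 0)" for a :: "nat set \<Rightarrow> real"
  have phit: "x \<in> U \<Longrightarrow> \<phi> a (\<tau> x) = (-1)^(s x) * a x" for a x
    using tU ti2 by (simp add: \<phi>_def)
  have carr: "alg_carrier (p+q) = {a. \<forall>z. z \<notin> U \<longrightarrow> a z = 0}"
    by (simp add: alg_carrier_def U_def)
  have "graded_iso p q p' q' \<phi>"
    unfolding graded_iso_def
  proof (intro conjI ballI allI impI)
    show "p + q = p' + q'" by (rule n)
  next
    define g where "g b = (\<lambda>x. if x \<in> U then (-1::real)^(s x) * b (\<tau> x) else 0)" for b :: "nat set \<Rightarrow> real"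
    show "bij_betw \<phi> (alg_carrier (p+q)) (alg_carrier (p'+q'))"
      unfolding n[symmetric] carr
    proof (rule bij_betw_byWitness[where f'=g], safe)
      fix a :: "nat set \<Rightarrow> real" and z assume "z \<notin> U"
      then show "\<phi> a z = 0" by (simp add: \<phi>_def)
    next
      fix a :: "nat set \<Rightarrow> real" and z assume "z \<notin> U"
      then show "g a z = 0" by (simp add: g_def)
    next
      fix a :: "nat set \<Rightarrow> real" assume a: "\<forall>z. z \<notin> U \<longrightarrow> a z = 0"
      show "g (\<phi> a) = a"
      proof
        fix x show "g (\<phi> a) x = a x"
          using a phit[of x a] by (simp add: g_def sq_sign)
      qed
    next
      fix b :: "nat set \<Rightarrow> real" assume b: "\<forall>z. z \<notin> U \<longrightarrow> b z = 0"
      show "\<phi> (g b) = b"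
      proof
        fix z show "\<phi> (g b) z = b z"
          using b ti1[of z] by (simp add: \<phi>_def g_def sq_sign)
      qed
    qed
  next
    fix a b assume "a \<in> alg_carrier (p+q)" "b \<in> alg_carrier (p+q)"
    show "\<phi> (\<lambda>z. a z + b z) = (\<lambda>z. \<phi> a z + \<phi> b z)"
      by (simp add: \<phi>_def fun_eq_iff algebra_simps)
  next
    fix c :: real and a assume "a \<in> alg_carrier (p+q)"
    show "\<phi> (\<lambda>z. c * a z) = (\<lambda>z. c * \<phi> a z)"
      by (simp add: \<phi>_def fun_eq_iff algebra_simps)
  next
    fix a assume "a \<in> alg_carrier (p+q)" "homogeneous (p+q) a"
    then obtain c x where x: "x \<subseteq> {..<p+q}" "a = (\<lambda>z. c * ubasis x z)"
      unfolding homogeneous_def by blast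
    have xU: "x \<in> U" using x by (simp add: U_def)
    have "\<phi> a = (\<lambda>z. (c * (-1)^(s x)) * ubasis (\<tau> x) z)"
    proof
      fix z show "\<phi> a z = (c * (-1)^(s x)) * ubasis (\<tau> x) z"
      proof (cases "z \<in> U")
        case True
        have "ti z = x \<longleftrightarrow> z = \<tau> x" using ti1[OF True] ti2[OF xU] by metis
        then show ?thesis using True by (auto simp: \<phi>_def x ubasis_def)
      next
        case False then show ?thesis using tU[OF xU] by (auto simp: \<phi>_def ubasis_def)
      qed
    qed
    moreover have "\<tau> x \<subseteq> {..<p'+q'}" using tU[OF xU] n by (simp add: U_def)
    ultimately show "homogeneous (p'+q') (\<phi> a)" unfolding homogeneous_def by blast
  next
    fix a b assume "a \<in> alg_carrier (p+q)" "b \<in> alg_carrier (p+q)"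
    show "\<phi> (omult p q a b) = omult p' q' (\<phi> a) (\<phi> b)"
    proof
      fix z
      have om: "omult p q a b w = (\<Sum>x\<in>U. \<Sum>y\<in>U. if zadd x y = w then (-1)^fO p q x y * a x * b y else 0)" for w
        by (simp add: omult_def U_def)
      have om': "omult p' q' (\<phi> a) (\<phi> b) z = (\<Sum>x\<in>U. \<Sum>y\<in>U. if zadd x y = z then (-1)^fO p' q' x y * \<phi> a x * \<phi> b y else 0)"
        by (simp add: omult_def U_def n)
      show "\<phi> (omult p q a b) z = omult p' q' (\<phi> a) (\<phi> b) z"
      proof (cases "z \<in> U")
        case False
        have "zadd x y \<noteq> z" if "x \<in> U" "y \<in> U" for x y
          using False that zadd_sub[of x "{..<p+q}" y] by (auto simp: U_def)
        then show ?thesis using False unfolding om' by (simp add: \<phi>_def)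
      next
        case True
        define w where "w = ti z"
        have wU: "w \<in> U" and tw: "\<tau> w = z" using ti1[OF True] by (auto simp: w_def)
        have "omult p' q' (\<phi> a) (\<phi> b) z =
           (\<Sum>x\<in>U. \<Sum>y\<in>U. if zadd (\<tau> x) (\<tau> y) = z then (-1)^fO p' q' (\<tau> x) (\<tau> y) * \<phi> a (\<tau> x) * \<phi> b (\<tau> y) else 0)"
        proof -
          have r: "(\<Sum>x'\<in>U. G x') = (\<Sum>x\<in>U. G (\<tau> x))" for G :: "nat set \<Rightarrow> real"
            by (rule sum.reindex_bij_betw[OF bijU, symmetric])
          show ?thesis unfolding om' by (subst r, rule sum.cong[OF refl], subst r, rule refl)
        qed
        also have "\<dots> = (\<Sum>x\<in>U. \<Sum>y\<in>U. (-1)^(s w) * (if zadd x y = w then (-1)^fO p q x y * a x * b y else 0))"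
        proof (intro sum.cong refl)
          fix x y assume xU: "x \<in> U" and yU: "y \<in> U"
          have xs: "x \<subseteq> {..<p+q}" "y \<subseteq> {..<p+q}" using xU yU by (auto simp: U_def)
          have zU: "zadd x y \<in> U" using zadd_sub[OF xs] by (simp add: U_def)
          have eq: "zadd (\<tau> x) (\<tau> y) = z \<longleftrightarrow> zadd x y = w"
            using hom[OF xs] injt[OF zU wU] tw by simp
          show "(if zadd (\<tau> x) (\<tau> y) = z then (-1)^fO p' q' (\<tau> x) (\<tau> y) * \<phi> a (\<tau> x) * \<phi> b (\<tau> y) else 0)
             = (-1)^(s w) * (if zadd x y = w then (-1)^fO p q x y * a x * b y else 0)"
          proof (cases "zadd x y = w")
            case True
            have ev: "even ((fO p' q' (\<tau> x) (\<tau> y) + s x + s y) + (fO p q x y + s w))"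
              using sgn[OF xs] True by (simp add: algebra_simps)
            have "(-1::real)^fO p' q' (\<tau> x) (\<tau> y) * (-1)^(s x) * (-1)^(s y)
                  = (-1)^(s w) * (-1)^fO p q x y"
              using sign_eq[OF ev] by (simp add: power_add mult.commute)
            moreover have "(-1::real)^fO p' q' (\<tau> x) (\<tau> y) * \<phi> a (\<tau> x) * \<phi> b (\<tau> y)
               = ((-1)^fO p' q' (\<tau> x) (\<tau> y) * (-1)^(s x) * (-1)^(s y)) * (a x * b y)"
              using phit[OF xU] phit[OF yU] by (simp add: algebra_simps)
            ultimately show ?thesis using True eq by (simp add: algebra_simps)
          next
            case False then show ?thesis using eq by simp
          qed
        qed
        also have "\<dots> = \<phi> (omult p q a b) z"
          using True by (simp add: \<phi>_def om sum_distrib_left w_def)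
        finally show ?thesis by simp
      qed
    qed
  qed
  then show ?thesis unfolding graded_isomorphic_def by blast
qed



definition zif :: "bool \<Rightarrow> nat set \<Rightarrow> nat set" where
  "zif e V = (if e then V else {})"

lemma zadd_Int_distrib: "zadd A B \<inter> C = zadd (A \<inter> C) (B \<inter> C)"
  by (auto simp: zadd_def)

lemma finite_zadd: "finite A \<Longrightarrow> finite B \<Longrightarrow> finite (zadd A B)"
  by (simp add: zadd_def)

lemma o1_empty: "o1 {} = False" by (simp add: o1_def)
lemma o2_empty: "o2 {} = False" by (simp add: o2_def numeral_2_eq_2)

lemma G1: "finite x \<Longrightarrow> finite V \<Longrightarrow> o1 (zadd x (zif e V)) = (o1 x \<noteq> (e \<and> o1 V))"
  by (cases e) (simp_all add: zif_def o1_zadd zadd_empty)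

lemma G2: "finite x \<Longrightarrow> finite V \<Longrightarrow>
   o2 (zadd x (zif e V)) = (o2 x \<noteq> (e \<and> ((o2 V \<noteq> (o1 x \<and> o1 V)) \<noteq> o1 (x \<inter> V))))"
  by (cases e) (auto simp add: zif_def o2_zadd zadd_empty o1_empty o2_empty)

lemma G3:
  assumes "finite x" "finite y" "finite V"
  shows "o1 (zadd x (zif e V) \<inter> zadd y (zif f V) \<inter> C) =
     (((o1 (x \<inter> y \<inter> C) \<noteq> (f \<and> o1 (x \<inter> C \<inter> V))) \<noteq> (e \<and> o1 (y \<inter> C \<inter> V))) \<noteq> (e \<and> f \<and> o1 (C \<inter> V)))"
proof -
  have s1: "zadd x V \<inter> y \<inter> C = zadd (x \<inter> y \<inter> C) (y \<inter> C \<inter> V)" for x y by (auto simp: zadd_def)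
  have s2: "x \<inter> zadd y V \<inter> C = zadd (x \<inter> y \<inter> C) (x \<inter> C \<inter> V)" for x y by (auto simp: zadd_def)
  have s3: "zadd x V \<inter> zadd y V \<inter> C = zadd (zadd (zadd (x \<inter> y \<inter> C) (x \<inter> C \<inter> V)) (y \<inter> C \<inter> V)) (C \<inter> V)" for x y
    by (auto simp: zadd_def)
  have fi: "finite (A \<inter> B)" if "finite A" for A B using that by simp
  show ?thesis
  proof (cases e; cases f)
    assume "e" "f" then show ?thesis unfolding zif_def using assms
      by (auto simp add: s3 o1_zadd finite_zadd zadd_empty)
  next
    assume "e" "\<not> f" then show ?thesis unfolding zif_def using assms
      by (auto simp add: s1 o1_zadd finite_zadd zadd_empty)
  next
    assume "\<not> e" "f" then show ?thesis unfolding zif_def using assms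
      by (auto simp add: s2 o1_zadd finite_zadd zadd_empty)
  next
    assume "\<not> e" "\<not> f" then show ?thesis unfolding zif_def using assms
      by (simp add: zadd_empty)
  qed
qed

lemma G4:
  assumes "finite x" "finite y" "finite V"
  shows "odd (Lr (zadd y (zif f V)) (zadd x (zif e V))) =
     (((odd (Lr y x) \<noteq> (e \<and> odd (Lr y V))) \<noteq> (f \<and> odd (Lr V x))) \<noteq> (e \<and> f \<and> odd (Lr V V)))"
  using assms
  by (cases e; cases f) (auto simp add: zif_def zadd_empty Lr_zadd1 Lr_zadd2 finite_zadd)

lemma pair_o1: "a \<noteq> b \<Longrightarrow> o1 (X \<inter> {a,b}) = ((a \<in> X) \<noteq> (b \<in> X))"
  by (cases "a \<in> X"; cases "b \<in> X") (auto simp: o1_def Int_insert_right)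

lemma pair_o1': "a \<noteq> b \<Longrightarrow> o1 {a,b} = False" by (simp add: o1_def)
lemma pair_o2: "a \<noteq> b \<Longrightarrow> o2 {a,b} = True" by (simp add: o2_def numeral_2_eq_2)

lemma Lr_single1: "Lr {a} B = card {j \<in> B. a \<le> j}"
proof -
  have "{(i,j). i \<in> {a} \<and> j \<in> B \<and> i \<le> j} = (\<lambda>j. (a,j)) ` {j \<in> B. a \<le> j}" by auto
  then show ?thesis unfolding Lr_def by (simp add: card_image inj_on_def)
qed

lemma Lr_single2: "Lr A {b} = card {i \<in> A. i \<le> b}"
proof -
  have "{(i,j). i \<in> A \<and> j \<in> {b} \<and> i \<le> j} = (\<lambda>i. (i,b)) ` {i \<in> A. i \<le> b}" by auto
  then show ?thesis unfolding Lr_def by (simp add: card_image inj_on_def)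
qed

lemma Lr_empty: "Lr {} B = 0" "Lr A {} = 0" by (simp_all add: Lr_def)



lemma image_zadd:
  assumes "inj_on f U" "A \<subseteq> U" "B \<subseteq> U"
  shows "f ` (zadd A B) = zadd (f ` A) (f ` B)"
proof -
  have "f ` (A - B) = f ` A - f ` B" by (rule inj_on_image_set_diff[OF assms(1)]) (use assms in auto)
  moreover have "f ` (B - A) = f ` B - f ` A" by (rule inj_on_image_set_diff[OF assms(1)]) (use assms in auto)
  ultimately show ?thesis unfolding zadd_def by (simp add: image_Un)
qed

lemma zadd_zif_hom: "zadd (zadd x y) (zif (e \<noteq> f) v) = zadd (zadd x (zif e v)) (zadd y (zif f v))"
  by (cases e; cases f) (auto simp: zif_def zadd_def)

lemma o1_diff: "finite z \<Longrightarrow> o1 (z - v) = (o1 z \<noteq> o1 (z \<inter> v))"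
  unfolding o1_def using card_split[of z v] by (metis even_add)

lemma Lr_y0: "Lr y {0} = (if (0::nat) \<in> y then 1 else 0)"
proof -
  have "{i \<in> y. i \<le> 0} = (if (0::nat) \<in> y then {0} else {})" by auto
  then show ?thesis by (simp add: Lr_single2)
qed

lemma Lr_yn: "y \<subseteq> {..<n} \<Longrightarrow> Lr y {n - 1} = card y"
proof -
  assume "y \<subseteq> {..<n}"
  then have "{i \<in> y. i \<le> n - 1} = y" by auto
  then show ?thesis by (simp add: Lr_single2)
qed

lemma Lr_0x: "Lr {0} x = card x"
  by (simp add: Lr_single1)

lemma Lr_nx: "x \<subseteq> {..<n} \<Longrightarrow> Lr {n - 1} x = (if n - 1 \<in> x then 1 else 0)"
proof -
  assume a: "x \<subseteq> {..<n}"
  have "{j \<in> x. n - 1 \<le> j} = (if n - 1 \<in> x then {n - 1} else {})"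
  proof (rule set_eqI)
    fix j show "j \<in> {j \<in> x. n - 1 \<le> j} \<longleftrightarrow> j \<in> (if n - 1 \<in> x then {n - 1} else {})"
    proof
      assume "j \<in> {j \<in> x. n - 1 \<le> j}"
      then have "j \<in> x" "n - 1 \<le> j" by auto
      moreover then have "j < n" using a by auto
      ultimately have "j = n - 1" by arith
      then show "j \<in> (if n - 1 \<in> x then {n - 1} else {})" using \<open>j \<in> x\<close> by simp
    qed (auto split: if_splits)
  qed
  then show ?thesis by (simp add: Lr_single1)
qed

lemma Lr_pair_right:
  assumes "y \<subseteq> {..<n}" "0 < n - 1"
  shows "odd (Lr y {0, n-1}) = ((0 \<in> y) \<noteq> o1 y)"
proof -
  have v: "{0, n-1} = zadd {0} {n-1}" using assms by (auto simp: zadd_def)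
  have f: "finite y" using assms finite_subset by blast
  show ?thesis unfolding v using f Lr_yn[OF assms(1)]
    by (simp add: Lr_zadd2 Lr_y0 o1_def)
qed

lemma Lr_pair_left:
  assumes "x \<subseteq> {..<n}" "0 < n - 1"
  shows "odd (Lr {0, n-1} x) = (o1 x \<noteq> (n - 1 \<in> x))"
proof -
  have v: "{0, n-1} = zadd {0} {n-1}" using assms by (auto simp: zadd_def)
  have f: "finite x" using assms finite_subset by blast
  show ?thesis unfolding v using f Lr_nx[OF assms(1)]
    by (simp add: Lr_zadd1 Lr_0x o1_def)
qed

lemma swap_sign:
  fixes p q :: nat
  assumes p: "1 \<le> p" and q: "1 \<le> q"
    and x: "x \<subseteq> {..<p+q}" and y: "y \<subseteq> {..<p+q}"
  defines "n \<equiv> p + q"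
  defines "\<rho> \<equiv> (\<lambda>k::nat. n - 1 - k)"
  defines "v \<equiv> {0, n - 1}"
  defines "\<tau> \<equiv> (\<lambda>x. \<rho> ` zadd x (zif (o1 x) v))"
  defines "s \<equiv> (\<lambda>x. card (x \<inter> v) * card (x - v))"
  shows "even (fO q p (\<tau> x) (\<tau> y) + fO p q x y + s x + s y + s (zadd x y))"
proof -
  define U where "U = {..<n}"
  define Q where "Q = {p..<n}"
  have xU: "x \<subseteq> U" and yU: "y \<subseteq> U" using x y by (auto simp: U_def n_def)
  have fx: "finite x" and fy: "finite y" using xU yU finite_subset U_def by auto
  have n1: "0 < n - 1" using p q by (simp add: n_def)
  have vU: "v \<subseteq> U" using n1 by (auto simp: v_def U_def)
  have fv: "finite v" by (simp add: v_def)
  have injr: "inj_on \<rho> U" by (auto simp: inj_on_def \<rho>_def U_def)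
  define ex where "ex = o1 x"
  define ey where "ey = o1 y"
  define X where "X = zadd x (zif ex v)"
  define Y where "Y = zadd y (zif ey v)"
  have XU: "X \<subseteq> U" "Y \<subseteq> U" using xU yU vU by (auto simp: X_def Y_def zif_def zadd_def)
  have fX: "finite X" "finite Y" using XU finite_subset U_def by auto
  have tx: "\<tau> x = \<rho> ` X" "\<tau> y = \<rho> ` Y" by (simp_all add: \<tau>_def X_def Y_def ex_def ey_def)
  have rU: "\<rho> ` A \<subseteq> {..<q+p}" if "A \<subseteq> U" for A using that by (auto simp: \<rho>_def U_def n_def)
  have rQ: "\<rho> ` C \<inter> {..<q} = \<rho> ` (C \<inter> Q)" if "C \<subseteq> U" for C
    using that by (force simp: \<rho>_def U_def Q_def n_def)
  have rI: "\<rho> ` X \<inter> \<rho> ` Y = \<rho> ` (X \<inter> Y)"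
    using inj_on_image_Int[OF injr XU] by simp
  have XYU: "X \<inter> Y \<subseteq> U" using XU by auto
  have F1: "odd (fO q p (\<tau> x) (\<tau> y)) = ((((o2 X \<and> o1 Y) \<noteq> (\<not> o1 X \<and> o1 (X \<inter> Y))) \<noteq> odd (Lr Y X)) \<noteq> o1 (X \<inter> Y \<inter> Q))"
  proof -
    have i1: "inj_on \<rho> X" "inj_on \<rho> Y" "inj_on \<rho> (X \<inter> Y)" "inj_on \<rho> (X \<inter> Y \<inter> Q)"
      using injr XU by (auto intro: inj_on_subset)
    have "Lr (\<rho> ` X) (\<rho> ` Y) = Lr Y X" unfolding \<rho>_def
      using Lr_rev[of X n Y] XU by (simp add: U_def)
    then show ?thesis unfolding tx
      using fO_parity[OF rU[OF XU(1)] rU[OF XU(2)]] rI rQ[OF XYU] i1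
      by (simp add: o1_image o2_image)
  qed
  have F2: "odd (fO p q x y) = ((((o2 x \<and> o1 y) \<noteq> (\<not> o1 x \<and> o1 (x \<inter> y))) \<noteq> odd (Lr x y)) \<noteq> o1 (x \<inter> y \<inter> {..<p}))"
    using fO_parity[OF x y] .
  have ov: "o1 v = False" "o2 v = True" using n1 by (simp_all add: v_def pair_o1' pair_o2)
  have pv: "o1 (A \<inter> v) = ((0 \<in> A) \<noteq> (n - 1 \<in> A))" for A using n1 by (simp add: v_def pair_o1)
  have eX: "o1 X = ex" "o1 Y = ey" using G1[OF fx fv] G1[OF fy fv] ov by (simp_all add: X_def Y_def ex_def ey_def)
  have eX2: "o2 X = (o2 x \<noteq> (ex \<and> \<not> o1 (x \<inter> v)))" using G2[OF fx fv, of ex] ov by (simp add: X_def)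
  have eXY: "o1 (X \<inter> Y) = (((o1 (x \<inter> y) \<noteq> (ey \<and> o1 (x \<inter> v))) \<noteq> (ex \<and> o1 (y \<inter> v))))"
    using G3[OF fx fy fv, of ex ey UNIV] ov by (simp add: X_def Y_def)
  have eXYQ: "o1 (X \<inter> Y \<inter> Q) = (((o1 (x \<inter> y \<inter> Q) \<noteq> (ey \<and> o1 (x \<inter> Q \<inter> v))) \<noteq> (ex \<and> o1 (y \<inter> Q \<inter> v))) \<noteq> (ex \<and> ey \<and> o1 (Q \<inter> v)))"
    using G3[OF fx fy fv, of ex ey Q] by (simp add: X_def Y_def)
  have eL: "odd (Lr Y X) = (((odd (Lr y x) \<noteq> (ex \<and> odd (Lr y v))) \<noteq> (ey \<and> odd (Lr v x))) \<noteq> (ex \<and> ey \<and> odd (Lr v v)))"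
    using G4[OF fx fy fv, of ey ex] by (simp add: X_def Y_def)
  have Lyv: "odd (Lr y v) = ((0 \<in> y) \<noteq> ey)" using Lr_pair_right[OF _ n1, of y] yU by (simp add: v_def U_def ey_def)
  have Lvx: "odd (Lr v x) = (ex \<noteq> (n - 1 \<in> x))" using Lr_pair_left[OF _ n1, of x] xU by (simp add: v_def U_def ex_def)
  have Lvv: "odd (Lr v v)" using Lr_pair_right[OF _ n1, of v] vU ov pv by (simp add: v_def U_def)
  have Lsw: "odd (Lr y x) = (odd (Lr x y) \<noteq> ((ex \<and> ey) \<noteq> o1 (x \<inter> y)))"
  proof -
    have "odd (Lr x y + Lr y x) = odd (card x * card y + card (x \<inter> y))"
      using Lr_swap_sum[OF fx fy] by simp
    then show ?thesis by (auto simp add: ex_def ey_def o1_def)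
  qed
  have q0: "0 \<notin> Q" "n - 1 \<in> Q" using p q by (auto simp: Q_def n_def)
  have Qv: "o1 (x \<inter> Q \<inter> v) = (n - 1 \<in> x)" "o1 (y \<inter> Q \<inter> v) = (n - 1 \<in> y)" "o1 (Q \<inter> v) = True"
    using pv[of "x \<inter> Q"] pv[of "y \<inter> Q"] pv[of Q] q0 by simp_all
  have PQ: "o1 (x \<inter> y) = (o1 (x \<inter> y \<inter> {..<p}) \<noteq> o1 (x \<inter> y \<inter> Q))"
  proof -
    have "x \<inter> y - {..<p} = x \<inter> y \<inter> Q" using xU by (auto simp: Q_def U_def)
    moreover have "card (x \<inter> y) = card (x \<inter> y - {..<p}) + card (x \<inter> y \<inter> {..<p})"
      using card_split[of "x \<inter> y" "{..<p}"] fx by simp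
    ultimately have "card (x \<inter> y) = card (x \<inter> y \<inter> Q) + card (x \<inter> y \<inter> {..<p})" by simp
    then show ?thesis unfolding o1_def by auto
  qed
  have sx: "odd (s x) = (o1 (x \<inter> v) \<and> (ex \<noteq> o1 (x \<inter> v)))"
    using o1_diff[OF fx, of v] by (simp add: s_def o1_def ex_def)
  have sy: "odd (s y) = (o1 (y \<inter> v) \<and> (ey \<noteq> o1 (y \<inter> v)))"
    using o1_diff[OF fy, of v] by (simp add: s_def o1_def ey_def)
  have sxy: "odd (s (zadd x y)) = ((o1 (x \<inter> v) \<noteq> o1 (y \<inter> v)) \<and> ((ex \<noteq> ey) \<noteq> (o1 (x \<inter> v) \<noteq> o1 (y \<inter> v))))"
  proof -
    have fz: "finite (zadd x y)" using fx fy by (rule finite_zadd)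
    have "o1 (zadd x y \<inter> v) = (o1 (x \<inter> v) \<noteq> o1 (y \<inter> v))"
      using fx fy by (simp add: zadd_Int_distrib o1_zadd)
    moreover have "o1 (zadd x y) = (ex \<noteq> ey)" using o1_zadd[OF fx fy] by (simp add: ex_def ey_def)
    ultimately show ?thesis using o1_diff[OF fz, of v] by (simp add: s_def o1_def)
  qed
  show ?thesis
    using F1 F2 eX eX2 eXY eXYQ eL Lyv Lvx Lvv Lsw Qv PQ sx sy sxy pv[of x] pv[of y]
    unfolding even_add ex_def[symmetric] ey_def[symmetric] by smt
qed



lemma swap_iso:
  assumes p: "1 \<le> p" and q: "1 \<le> q"
  shows "graded_isomorphic p q q p"
proof -
  define n where "n = p + q"
  define \<rho> where "\<rho> = (\<lambda>k::nat. n - 1 - k)"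
  define v where "v = {0, n - 1}"
  define \<tau> where "\<tau> = (\<lambda>x. \<rho> ` zadd x (zif (o1 x) v))"
  define s where "s = (\<lambda>x. card (x \<inter> v) * card (x - v))"
  define U where "U = {..<n}"
  have n1: "0 < n - 1" using p q by (simp add: n_def)
  have vU: "v \<subseteq> U" using n1 by (auto simp: v_def U_def)
  have fv: "finite v" by (simp add: v_def)
  have ov: "o1 v = False" using n1 by (simp add: v_def pair_o1')
  have injr: "inj_on \<rho> U" by (auto simp: inj_on_def \<rho>_def U_def)
  have rr: "\<rho> ` (\<rho> ` A) = A" if "A \<subseteq> U" for A
  proof -
    have "\<rho> (\<rho> k) = k" if "k \<in> U" for k using that by (simp add: \<rho>_def U_def)
    then show ?thesis using that by (force simp: image_image)
  qed
  have rU: "\<rho> ` A \<subseteq> U" for A using p by (auto simp: \<rho>_def U_def n_def)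
  have rv: "\<rho> ` v = v" by (auto simp: \<rho>_def v_def)
  have zU: "zadd x (zif e v) \<subseteq> U" if "x \<subseteq> U" for x e
    using that vU by (auto simp: zif_def zadd_def)
  have fin: "finite x" if "x \<subseteq> U" for x using that finite_subset U_def by auto
  have o1t: "o1 (\<tau> x) = o1 x" if "x \<subseteq> U" for x
  proof -
    have "inj_on \<rho> (zadd x (zif (o1 x) v))" using injr zU[OF that] by (rule inj_on_subset)
    then show ?thesis using G1[OF fin[OF that] fv] ov by (simp add: \<tau>_def o1_image)
  qed
  have tt: "\<tau> (\<tau> x) = x" if "x \<subseteq> U" for x
  proof -
    define E where "E = zif (o1 x) v"
    have EU: "E \<subseteq> U" using vU by (auto simp: E_def zif_def)
    have rE: "\<rho> ` E = E" using rv by (simp add: E_def zif_def)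
    have "\<tau> (\<tau> x) = \<rho> ` zadd (\<rho> ` zadd x E) E" using o1t[OF that] by (simp add: \<tau>_def E_def)
    also have "zadd (\<rho> ` zadd x E) E = \<rho> ` zadd (zadd x E) E"
      using image_zadd[OF injr zU[OF that] EU] rE by (simp add: E_def)
    also have "\<rho> ` \<dots> = zadd (zadd x E) E" by (rule rr) (use zU[OF that] EU in \<open>auto simp: zadd_def E_def\<close>)
    also have "\<dots> = x" by (simp add: zadd_assoc zadd_self zadd_empty)
    finally show ?thesis .
  qed
  show ?thesis
  proof (rule construct[where \<tau> = \<tau> and s = s])
    show "p + q = q + p" by simp
    show "bij_betw \<tau> (Pow {..<p+q}) (Pow {..<p+q})"
    proof (rule bij_betw_byWitness[where f'=\<tau>])
      show "\<forall>a\<in>Pow {..<p + q}. \<tau> (\<tau> a) = a" using tt by (simp add: U_def n_def)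
      show "\<forall>a\<in>Pow {..<p + q}. \<tau> (\<tau> a) = a" using tt by (simp add: U_def n_def)
      show "\<tau> ` Pow {..<p + q} \<subseteq> Pow {..<p + q}" using rU by (auto simp: \<tau>_def U_def n_def)
      show "\<tau> ` Pow {..<p + q} \<subseteq> Pow {..<p + q}" using rU by (auto simp: \<tau>_def U_def n_def)
    qed
  next
    fix x y assume x: "x \<subseteq> {..<p+q}" and y: "y \<subseteq> {..<p+q}"
    then have xU: "x \<subseteq> U" and yU: "y \<subseteq> U" by (auto simp: U_def n_def)
    have "o1 (zadd x y) = (o1 x \<noteq> o1 y)" using o1_zadd[OF fin[OF xU] fin[OF yU]] .
    then have "\<tau> (zadd x y) = \<rho> ` zadd (zadd x (zif (o1 x) v)) (zadd y (zif (o1 y) v))"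
      using zadd_zif_hom[of x y "o1 x" "o1 y" v] by (simp add: \<tau>_def)
    also have "\<dots> = zadd (\<tau> x) (\<tau> y)"
      using image_zadd[OF injr zU[OF xU] zU[OF yU]] by (simp add: \<tau>_def)
    finally show "\<tau> (zadd x y) = zadd (\<tau> x) (\<tau> y)" .
  next
    fix x y assume x: "x \<subseteq> {..<p+q}" and y: "y \<subseteq> {..<p+q}"
    show "even (fO q p (\<tau> x) (\<tau> y) + fO p q x y + s x + s y + s (zadd x y))"
      using swap_sign[OF p q x y] by (simp add: \<tau>_def \<rho>_def v_def s_def n_def)
  qed
qed



definition kap :: "nat \<Rightarrow> nat \<Rightarrow> nat" where
  "kap n k = (if k = 0 then n - 1 else k - 1)"

lemma kap_inj: "inj_on (kap n) {..<n}"
  by (auto simp: inj_on_def kap_def split: if_splits)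

lemma kap_lt: "0 < n \<Longrightarrow> k < n \<Longrightarrow> kap n k < n"
  by (auto simp: kap_def)

lemma kap_bij: "0 < n \<Longrightarrow> bij_betw (kap n) {..<n} {..<n}"
proof -
  assume n: "0 < n"
  have "kap n ` {..<n} = {..<n}"
  proof
    show "kap n ` {..<n} \<subseteq> {..<n}" using kap_lt[OF n] by auto
    show "{..<n} \<subseteq> kap n ` {..<n}"
    proof
      fix j assume j: "j \<in> {..<n}"
      show "j \<in> kap n ` {..<n}"
      proof (cases "j = n - 1")
        case True then show ?thesis using n by (auto simp: kap_def intro!: image_eqI[of _ _ 0])
      next
        case False then have "j + 1 < n" using j by auto
        then show ?thesis by (auto simp: kap_def intro!: image_eqI[of _ _ "j+1"])
      qed
    qed
  qed
  then show ?thesis using kap_inj by (simp add: bij_betw_def)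
qed

lemma Lr_kap:
  assumes A: "A \<subseteq> {..<n}" and B: "B \<subseteq> {..<n}"
  shows "odd (Lr (kap n ` A) (kap n ` B)) = ((odd (Lr A B) \<noteq> (0 \<in> A \<and> o1 B)) \<noteq> (0 \<in> B \<and> o1 A))"
proof -
  have fA: "finite A" and fB: "finite B" using A B finite_subset by auto
  let ?S1 = "{(i,j). i \<in> A \<and> j \<in> B \<and> i \<le> j}"
  let ?S2 = "{(i,j). i \<in> A \<and> j \<in> B \<and> kap n i \<le> kap n j}"
  have e2: "{(i,j). i \<in> kap n ` A \<and> j \<in> kap n ` B \<and> i \<le> j} = (\<lambda>(i,j). (kap n i, kap n j)) ` ?S2"
    by auto
  have inj2: "inj_on (\<lambda>(i,j). (kap n i, kap n j)) ?S2"
    using inj_onD[OF kap_inj] A B by (auto simp: inj_on_def subset_iff)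
  have L2: "Lr (kap n ` A) (kap n ` B) = card ?S2"
    unfolding Lr_def e2 using inj2 by (simp add: card_image)
  have fS1: "finite ?S1" using Lr_fin[OF fA fB] .
  have fS2: "finite ?S2" by (rule finite_subset[of _ "A \<times> B"]) (use fA fB in auto)
  have D: "(?S1 - ?S2) \<union> (?S2 - ?S1) = (({0} \<inter> A) \<times> (B - {0})) \<union> ((A - {0}) \<times> ({0} \<inter> B))"
  proof (rule set_eqI, clarify)
    fix i j
    have "i \<in> A \<Longrightarrow> i < n" "j \<in> B \<Longrightarrow> j < n" using A B by auto
    then show "((i,j) \<in> (?S1 - ?S2) \<union> (?S2 - ?S1)) = ((i,j) \<in> (({0} \<inter> A) \<times> (B - {0})) \<union> ((A - {0}) \<times> ({0} \<inter> B)))"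
      by (auto simp: kap_def)
  qed
  have cD: "card ((({0} \<inter> A) \<times> (B - {0})) \<union> ((A - {0}) \<times> ({0} \<inter> B))) =
      card ({0} \<inter> A) * card (B - {0}) + card (A - {0}) * card ({0} \<inter> B)"
    by (subst card_Un_disjoint) (use fA fB in \<open>auto simp: card_cartesian_product\<close>)
  have pD: "odd (card ((?S1 - ?S2) \<union> (?S2 - ?S1))) = (odd (card ?S1) \<noteq> odd (card ?S2))"
    by (rule symdiff_parity[OF fS1 fS2])
  have c0: "card ({0} \<inter> X) = (if 0 \<in> X then 1 else 0)" for X :: "nat set" by auto
  have cm: "card (X - {0}) + (if 0 \<in> X then 1 else 0) = card X" if "finite X" for X :: "nat set"
  proof (cases "0 \<in> X")
    case True
    then have "card X > 0" using that card_gt_0_iff by blast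
    then show ?thesis using True that by (simp add: card_Diff_singleton)
  qed (simp)
  have oA: "odd (card (A - {0})) = (o1 A \<noteq> (0 \<in> A))" using cm[OF fA] unfolding o1_def
    by (cases "0 \<in> A") auto
  have oB: "odd (card (B - {0})) = (o1 B \<noteq> (0 \<in> B))" using cm[OF fB] unfolding o1_def
    by (cases "0 \<in> B") auto
  have pD': "odd (card ?S2) = (odd (card ?S1) \<noteq> odd (card ({0} \<inter> A) * card (B - {0}) + card (A - {0}) * card ({0} \<inter> B)))"
    using pD unfolding D cD by auto
  have "odd (card ({0} \<inter> A) * card (B - {0}) + card (A - {0}) * card ({0} \<inter> B))
      = ((0 \<in> A \<and> odd (card (B - {0}))) \<noteq> (odd (card (A - {0})) \<and> 0 \<in> B))"
    unfolding c0 by (cases "0 \<in> A"; cases "0 \<in> B") auto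
  then show ?thesis unfolding L2 Lr_def[of A B, symmetric] using pD' oA oB
    by (cases "0 \<in> A"; cases "0 \<in> B") (auto simp: Lr_def)
qed



lemma o1_minus0: "finite X \<Longrightarrow> o1 (X - {0}) = (o1 X \<noteq> ((0::nat) \<in> X))"
proof -
  assume f: "finite X"
  show ?thesis
  proof (cases "0 \<in> X")
    case True
    then have "card X > 0" using f card_gt_0_iff by blast
    then show ?thesis using True f by (auto simp: card_Diff_singleton o1_def)
  qed (simp)
qed

lemma shift_bool:
  fixes fOp fO sx sy sxy o2X o1X o1Y o1XY k o1XYP2 o1x o1y o2x o1xy lxy o1xyP lXY X0 Y0 x0 y0
    ex ey lxW lWy lyW lWW o1xyP2 o1xR o1yR o2xR o2yR o1xyR :: bool
  assumes F1: "(\<not> fOp) = ((((o2X \<and> o1Y) \<noteq> (\<not> o1X \<and> o1XY)) \<noteq> (\<not> k)) \<noteq> o1XYP2)"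
    and F1L: "(\<not> k) = (((\<not> lXY) \<noteq> (X0 \<and> o1Y)) \<noteq> (Y0 \<and> o1X))"
    and F2: "(\<not> fO) = ((((o2x \<and> o1y) \<noteq> (\<not> o1x \<and> o1xy)) \<noteq> (\<not> lxy)) \<noteq> o1xyP)"
    and eX1: "o1X = o1x" and eX2': "o1Y = o1y" and eX2: "o2X = o2x" and eXY: "o1XY = o1xy"
    and eXYP: "o1XYP2 = (((o1xyP2 \<noteq> (ey \<and> o1xR)) \<noteq> (ex \<and> o1yR)) \<noteq> (ex \<and> ey))"
    and e01: "X0 = (x0 \<noteq> ex)" and e02: "Y0 = (y0 \<noteq> ey)"
    and eL: "(\<not> lXY) = ((((\<not> lxy) \<noteq> (ey \<and> \<not> lxW)) \<noteq> (ex \<and> \<not> lWy)) \<noteq> (ex \<and> ey \<and> \<not> lWW))"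
    and LWy: "(\<not> lWy) = ((\<not> lyW) \<noteq> ey)"
    and LWW: "\<not> lWW"
    and P2d: "o1xyP2 = ((o1xyP \<noteq> (x0 \<and> y0)) \<noteq> o1xyR)"
    and sx: "(\<not> sx) = (((ex \<and> \<not> lxW) \<noteq> o2xR) \<noteq> (o1xR \<and> (o1x \<noteq> o1xR)))"
    and sy: "(\<not> sy) = (((ey \<and> \<not> lyW) \<noteq> o2yR) \<noteq> (o1yR \<and> (o1y \<noteq> o1yR)))"
    and sxy: "(\<not> sxy) = (((((ex \<noteq> ey) \<and> ((\<not> lxW) \<noteq> (\<not> lyW))) \<noteq>
        (((o2xR \<noteq> o2yR) \<noteq> (o1xR \<and> o1yR)) \<noteq> o1xyR)) \<noteq>
        ((o1xR \<noteq> o1yR) \<and> ((o1x \<noteq> o1y) \<noteq> (o1xR \<noteq> o1yR)))))"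
    and exR1: "ex = (x0 \<noteq> o1xR)" and exR2: "ey = (y0 \<noteq> o1yR)"
  shows "((((fOp = fO) = sx) = sy) = sxy)"
  using assms by argo

lemma shift_sign:
  fixes p q :: nat
  assumes p: "1 \<le> p" and q: "1 \<le> q"
    and x: "x \<subseteq> {..<p+(q+4)}" and y: "y \<subseteq> {..<p+(q+4)}"
  defines "n \<equiv> p + (q + 4)"
  defines "R \<equiv> {p..<p+5}"
  defines "W \<equiv> insert 0 R"
  defines "\<tau> \<equiv> (\<lambda>x. kap n ` zadd x (zif (o1 (x \<inter> W)) W))"
  defines "s \<equiv> (\<lambda>x. (if o1 (x \<inter> W) then Lr x W else 0) + (card (x \<inter> R) choose 2) + card (x \<inter> R) * card (x - R))"
  shows "even (fO (p+4) q (\<tau> x) (\<tau> y) + fO p (q+4) x y + s x + s y + s (zadd x y))"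
proof -
  define U where "U = {..<n}"
  define P where "P = {..<p}"
  define P2 where "P2 = {1..<p+5}"
  have xU: "x \<subseteq> U" and yU: "y \<subseteq> U" using x y by (auto simp: U_def n_def)
  have fx: "finite x" and fy: "finite y" using xU yU finite_subset U_def by auto
  have WU: "W \<subseteq> U" using p q by (auto simp: W_def R_def U_def n_def)
  have fW: "finite W" by (simp add: W_def R_def)
  have cR: "card R = 5" by (simp add: R_def)
  have cW: "card W = 6" using p cR by (simp add: W_def R_def)
  have injk: "inj_on (kap n) U" using kap_inj by (simp add: U_def)
  define ex where "ex = o1 (x \<inter> W)"
  define ey where "ey = o1 (y \<inter> W)"
  define X where "X = zadd x (zif ex W)"
  define Y where "Y = zadd y (zif ey W)"
  have XU: "X \<subseteq> U" "Y \<subseteq> U" using xU yU WU by (auto simp: X_def Y_def zif_def zadd_def)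
  have fX: "finite X" "finite Y" using XU finite_subset U_def by auto
  have tx: "\<tau> x = kap n ` X" "\<tau> y = kap n ` Y" by (simp_all add: \<tau>_def X_def Y_def ex_def ey_def)
  have n0: "0 < n" by (simp add: n_def)
  have kU: "kap n ` A \<subseteq> {..<(p+4)+q}" if "A \<subseteq> U" for A
    using that kap_lt[OF n0] by (force simp: U_def n_def)
  have kQ: "kap n ` C \<inter> {..<p+4} = kap n ` (C \<inter> P2)" if "C \<subseteq> U" for C
  proof -
    have "kap n k < p + 4 \<longleftrightarrow> k \<in> P2" if "k < n" for k
      using that q by (auto simp: kap_def P2_def n_def)
    then show ?thesis using \<open>C \<subseteq> U\<close> by (force simp: U_def)
  qed
  have kI: "kap n ` X \<inter> kap n ` Y = kap n ` (X \<inter> Y)"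
    using inj_on_image_Int[OF injk XU] by simp
  have XYU: "X \<inter> Y \<subseteq> U" using XU by auto
  have F1: "odd (fO (p+4) q (\<tau> x) (\<tau> y)) = ((((o2 X \<and> o1 Y) \<noteq> (\<not> o1 X \<and> o1 (X \<inter> Y))) \<noteq> odd (Lr (kap n ` X) (kap n ` Y))) \<noteq> o1 (X \<inter> Y \<inter> P2))"
  proof -
    have i1: "inj_on (kap n) X" "inj_on (kap n) Y" "inj_on (kap n) (X \<inter> Y)" "inj_on (kap n) (X \<inter> Y \<inter> P2)"
      using injk XU by (auto intro: inj_on_subset)
    show ?thesis unfolding tx
      using fO_parity[OF kU[OF XU(1)] kU[OF XU(2)]] kI kQ[OF XYU] i1
      by (simp add: o1_image o2_image)
  qed
  have F1L: "odd (Lr (kap n ` X) (kap n ` Y)) = ((odd (Lr X Y) \<noteq> (0 \<in> X \<and> o1 Y)) \<noteq> (0 \<in> Y \<and> o1 X))"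
    using Lr_kap[of X n Y] XU by (simp add: U_def)
  have F2: "odd (fO p (q+4) x y) = ((((o2 x \<and> o1 y) \<noteq> (\<not> o1 x \<and> o1 (x \<inter> y))) \<noteq> odd (Lr x y)) \<noteq> o1 (x \<inter> y \<inter> P))"
    using fO_parity[OF x y] by (simp add: P_def)
  have oW: "o1 W = False" "o2 W = True" using cW by (simp_all add: o1_def o2_def choose_two)
  have oR: "o1 R = True" using cR by (simp add: o1_def)
  have eX: "o1 X = o1 x" "o1 Y = o1 y" using G1[OF fx fW] G1[OF fy fW] oW by (simp_all add: X_def Y_def)
  have eX2: "o2 X = o2 x"
    using G2[OF fx fW, of ex] oW by (simp add: X_def ex_def[symmetric])
  have eXY: "o1 (X \<inter> Y) = o1 (x \<inter> y)"
    using G3[OF fx fy fW, of ex ey UNIV] oW by (auto simp add: X_def Y_def ex_def[symmetric] ey_def[symmetric])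
  have P2W: "P2 \<inter> W = R" "x \<inter> P2 \<inter> W = x \<inter> R" "y \<inter> P2 \<inter> W = y \<inter> R" using p
    by (auto simp: P2_def W_def R_def)
  have eXYP: "o1 (X \<inter> Y \<inter> P2) = (((o1 (x \<inter> y \<inter> P2) \<noteq> (ey \<and> o1 (x \<inter> R))) \<noteq> (ex \<and> o1 (y \<inter> R))) \<noteq> (ex \<and> ey))"
    using G3[OF fx fy fW, of ex ey P2] P2W oR by (simp add: X_def Y_def)
  have e0: "(0 \<in> X) = ((0 \<in> x) \<noteq> ex)" "(0 \<in> Y) = ((0 \<in> y) \<noteq> ey)"
    by (auto simp: X_def Y_def zadd_def zif_def W_def)
  have eL: "odd (Lr X Y) = (((odd (Lr x y) \<noteq> (ey \<and> odd (Lr x W))) \<noteq> (ex \<and> odd (Lr W y))) \<noteq> (ex \<and> ey \<and> odd (Lr W W)))"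
    using G4[OF fy fx fW, of ex ey] by (auto simp add: X_def Y_def)
  have LWy: "odd (Lr W y) = (odd (Lr y W) \<noteq> ey)"
  proof -
    have "odd (Lr W y + Lr y W) = odd (card W * card y + card (W \<inter> y))"
      using Lr_swap_sum[OF fW fy] by simp
    then show ?thesis using cW by (auto simp: ey_def o1_def Int_commute)
  qed
  have LWW: "odd (Lr W W)"
  proof -
    have "Lr W W + Lr W W = 42" using Lr_swap_sum[OF fW fW] cW by simp
    then have "Lr W W = 21" by simp
    then show ?thesis by simp
  qed
  have P2d: "o1 (x \<inter> y \<inter> P2) = ((o1 (x \<inter> y \<inter> P) \<noteq> (0 \<in> x \<and> 0 \<in> y)) \<noteq> o1 (x \<inter> y \<inter> R))"
  proof -
    have e: "x \<inter> y \<inter> P2 = zadd ((x \<inter> y \<inter> P) - {0}) (x \<inter> y \<inter> R)"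
      using p by (auto simp: zadd_def P2_def P_def R_def)
    have f: "finite (x \<inter> y \<inter> P)" "finite (x \<inter> y \<inter> R)" using fx by auto
    have "0 \<in> P" using p by (simp add: P_def)
    then show ?thesis unfolding e using f o1_minus0[OF f(1)]
      by (auto simp add: o1_zadd)
  qed
  have sx: "odd (s x) = (((ex \<and> odd (Lr x W)) \<noteq> o2 (x \<inter> R)) \<noteq> (o1 (x \<inter> R) \<and> (o1 x \<noteq> o1 (x \<inter> R))))"
    using o1_diff[OF fx, of R] by (auto simp add: s_def o1_def o2_def ex_def)
  have sy: "odd (s y) = (((ey \<and> odd (Lr y W)) \<noteq> o2 (y \<inter> R)) \<noteq> (o1 (y \<inter> R) \<and> (o1 y \<noteq> o1 (y \<inter> R))))"
    using o1_diff[OF fy, of R] by (auto simp add: s_def o1_def o2_def ey_def)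
  have sxy: "odd (s (zadd x y)) = (((((ex \<noteq> ey) \<and> (odd (Lr x W) \<noteq> odd (Lr y W))) \<noteq>
        (((o2 (x \<inter> R) \<noteq> o2 (y \<inter> R)) \<noteq> (o1 (x \<inter> R) \<and> o1 (y \<inter> R))) \<noteq> o1 (x \<inter> y \<inter> R))) \<noteq>
        ((o1 (x \<inter> R) \<noteq> o1 (y \<inter> R)) \<and> ((o1 x \<noteq> o1 y) \<noteq> (o1 (x \<inter> R) \<noteq> o1 (y \<inter> R))))))"
  proof -
    have fz: "finite (zadd x y)" using fx fy by (rule finite_zadd)
    have fR: "finite (x \<inter> R)" "finite (y \<inter> R)" using fx fy by auto
    have a: "o1 (zadd x y \<inter> W) = (ex \<noteq> ey)"
      using fx fy by (simp add: zadd_Int_distrib o1_zadd ex_def ey_def)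
    have b: "odd (Lr (zadd x y) W) = (odd (Lr x W) \<noteq> odd (Lr y W))" by (rule Lr_zadd1[OF fx fy fW])
    have c0: "zadd x y \<inter> R = zadd (x \<inter> R) (y \<inter> R)" by (rule zadd_Int_distrib)
    have c1: "x \<inter> R \<inter> (y \<inter> R) = x \<inter> y \<inter> R" by auto
    have c: "o2 (zadd x y \<inter> R) = (((o2 (x \<inter> R) \<noteq> o2 (y \<inter> R)) \<noteq> (o1 (x \<inter> R) \<and> o1 (y \<inter> R))) \<noteq> o1 (x \<inter> y \<inter> R))"
      unfolding c0 using o2_zadd[OF fR] c1 by simp
    have d: "o1 (zadd x y \<inter> R) = (o1 (x \<inter> R) \<noteq> o1 (y \<inter> R))" unfolding c0 using o1_zadd[OF fR] .
    have e: "o1 (zadd x y) = (o1 x \<noteq> o1 y)" using o1_zadd[OF fx fy] .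
    have "odd (s (zadd x y)) = ((((o1 (zadd x y \<inter> W)) \<and> odd (Lr (zadd x y) W)) \<noteq> o2 (zadd x y \<inter> R)) \<noteq> (o1 (zadd x y \<inter> R) \<and> (o1 (zadd x y) \<noteq> o1 (zadd x y \<inter> R))))"
      using o1_diff[OF fz, of R] by (auto simp add: s_def o1_def o2_def)
    then show ?thesis unfolding a b c d e .
  qed
  have exR: "ex = ((0 \<in> x) \<noteq> o1 (x \<inter> R))" "ey = ((0 \<in> y) \<noteq> o1 (y \<inter> R))"
  proof -
    have R0: "0 \<notin> R" using p by (simp add: R_def)
    have s0: "o1 (z \<inter> {0}) = (0 \<in> z)" for z :: "nat set" by (cases "0 \<in> z") (auto simp: o1_def Int_insert_right)
    have "o1 (z \<inter> W) = ((0 \<in> z) \<noteq> o1 (z \<inter> R))" if "finite z" for z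
    proof -
      have "z \<inter> W = zadd (z \<inter> {0}) (z \<inter> R)" using R0 by (auto simp: W_def zadd_def)
      then have "o1 (z \<inter> W) = (o1 (z \<inter> {0}) \<noteq> o1 (z \<inter> R))" using that by (simp add: o1_zadd)
      then show ?thesis using s0 by simp
    qed
    then show "ex = ((0 \<in> x) \<noteq> o1 (x \<inter> R))" "ey = ((0 \<in> y) \<noteq> o1 (y \<inter> R))"
      using fx fy by (simp_all add: ex_def ey_def)
  qed
  show ?thesis
    unfolding even_add
    by (rule shift_bool[OF F1 F1L F2 eX(1) eX(2) eX2 eXY eXYP e0(1) e0(2) eL LWy LWW P2d sx sy sxy exR(1) exR(2)])
qed



lemma shift_iso:
  assumes p: "1 \<le> p" and q: "1 \<le> q"
  shows "graded_isomorphic p (q + 4) (p + 4) q"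
proof -
  define n where "n = p + (q + 4)"
  define R where "R = {p..<p+5}"
  define W where "W = insert 0 R"
  define t where "t = (\<lambda>x. zadd x (zif (o1 (x \<inter> W)) W))"
  define \<tau> where "\<tau> = (\<lambda>x. kap n ` zadd x (zif (o1 (x \<inter> W)) W))"
  define s where "s = (\<lambda>x. (if o1 (x \<inter> W) then Lr x W else 0) + (card (x \<inter> R) choose 2) + card (x \<inter> R) * card (x - R))"
  define U where "U = {..<n}"
  have n0: "0 < n" by (simp add: n_def)
  have kinj: "inj_on (kap n) U" using kap_inj by (simp add: U_def)
  have WU: "W \<subseteq> U" using p q by (auto simp: W_def R_def U_def n_def)
  have fW: "finite W" by (simp add: W_def R_def)
  have cW: "card W = 6" using p by (simp add: W_def R_def)
  have oW: "o1 W = False" using cW by (simp add: o1_def)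
  have fin: "finite x" if "x \<subseteq> U" for x using that finite_subset U_def by auto
  have tU: "t x \<subseteq> U" if "x \<subseteq> U" for x using that WU by (auto simp: t_def zif_def zadd_def)
  have et: "o1 (t x \<inter> W) = o1 (x \<inter> W)" if "x \<subseteq> U" for x
  proof -
    have "t x \<inter> W = zadd (x \<inter> W) (zif (o1 (x \<inter> W)) W)"
      by (auto simp: t_def zadd_def zif_def)
    then show ?thesis using G1[of "x \<inter> W" W "o1 (x \<inter> W)"] fW oW by simp
  qed
  have tt: "t (t x) = x" if "x \<subseteq> U" for x
    using et[OF that] by (simp add: t_def zadd_assoc zadd_self zadd_empty)
  have bt: "bij_betw t (Pow U) (Pow U)"
    by (rule bij_betw_byWitness[where f'=t]) (use tt tU in auto)
  have bk: "bij_betw (image (kap n)) (Pow U) (Pow U)"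
    using bij_betw_Pow[OF kap_bij[OF n0]] by (simp add: U_def)
  have bij: "bij_betw \<tau> (Pow U) (Pow U)"
  proof -
    have "\<tau> = image (kap n) \<circ> t" by (simp add: fun_eq_iff \<tau>_def t_def)
    then show ?thesis using bij_betw_trans[OF bt bk] by simp
  qed
  show ?thesis
  proof (rule construct[where \<tau> = \<tau> and s = s])
    show "p + (q + 4) = p + 4 + q" by simp
    show "bij_betw \<tau> (Pow {..<p + (q + 4)}) (Pow {..<p + (q + 4)})" using bij by (simp add: U_def n_def)
  next
    fix x y assume x: "x \<subseteq> {..<p + (q + 4)}" and y: "y \<subseteq> {..<p + (q + 4)}"
    then have xU: "x \<subseteq> U" and yU: "y \<subseteq> U" by (auto simp: U_def n_def)
    have "o1 (zadd x y \<inter> W) = (o1 (x \<inter> W) \<noteq> o1 (y \<inter> W))"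
      using fin[OF xU] fin[OF yU] by (simp add: zadd_Int_distrib o1_zadd)
    then have "\<tau> (zadd x y) = kap n ` zadd (zadd x (zif (o1 (x \<inter> W)) W)) (zadd y (zif (o1 (y \<inter> W)) W))"
      using zadd_zif_hom[of x y "o1 (x \<inter> W)" "o1 (y \<inter> W)" W] by (simp add: \<tau>_def)
    also have "\<dots> = zadd (\<tau> x) (\<tau> y)"
      using image_zadd[OF kinj tU[OF xU, unfolded t_def] tU[OF yU, unfolded t_def]] by (simp add: \<tau>_def)
    finally show "\<tau> (zadd x y) = zadd (\<tau> x) (\<tau> y)" .
  next
    fix x y assume x: "x \<subseteq> {..<p + (q + 4)}" and y: "y \<subseteq> {..<p + (q + 4)}"
    show "even (fO (p + 4) q (\<tau> x) (\<tau> y) + fO p (q + 4) x y + s x + s y + s (zadd x y))"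
      using shift_sign[OF p q x y] unfolding \<tau>_def s_def n_def R_def W_def .
  qed
qed



lemma basis_mult:
  assumes "x \<subseteq> {..<p+q}" "y \<subseteq> {..<p+q}"
  shows "omult p q (\<lambda>z. c * ubasis x z) (\<lambda>z. d * ubasis y z) = (\<lambda>z. (c * d * (-1)^fO p q x y) * ubasis (zadd x y) z)"
proof
  fix z
  have "omult p q (\<lambda>z. c * ubasis x z) (\<lambda>z. d * ubasis y z) z =
     (\<Sum>x'\<in>Pow {..<p+q}. if x' = x then (\<Sum>y'\<in>Pow {..<p+q}. if y' = y then
        (if zadd x y = z then (-1)^fO p q x y * c * d else 0) else 0) else 0)"
    unfolding omult_def
  proof (rule sum.cong[OF refl])
    fix x' assume "x' \<in> Pow {..<p+q}"
    show "(\<Sum>y'\<in>Pow {..<p+q}. if zadd x' y' = z then (-1)^fO p q x' y' * (c * ubasis x x') * (d * ubasis y y') else 0)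
      = (if x' = x then (\<Sum>y'\<in>Pow {..<p+q}. if y' = y then
        (if zadd x y = z then (-1)^fO p q x y * c * d else 0) else 0) else 0)"
    proof (cases "x' = x")
      case True
      show ?thesis unfolding True by (subst if_P[OF refl], rule sum.cong[OF refl]) (auto simp: ubasis_def)
    next
      case False
      then have u: "ubasis x x' = 0" by (simp add: ubasis_def)
      show ?thesis using False by (simp only: if_False) (rule sum.neutral, simp add: u)
    qed
  qed
  also have "\<dots> = (if zadd x y = z then (-1)^fO p q x y * c * d else 0)"
    using assms by simp
  finally show "omult p q (\<lambda>z. c * ubasis x z) (\<lambda>z. d * ubasis y z) z = (c * d * (-1)^fO p q x y) * ubasis (zadd x y) z"
    by (simp add: ubasis_def)
qed

lemma fO_empty: "fO p q {} {} = 0"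
  by (simp add: fO_def bit_def Let_def)

definition Sc :: "nat \<Rightarrow> nat \<Rightarrow> complex" where
  "Sc p q = (\<Sum>x\<in>Pow {..<p+q}. (-1::complex)^(fO p q x x))"

lemma ubasis_carrier: "x \<subseteq> {..<n} \<Longrightarrow> ubasis x \<in> alg_carrier n"
  by (auto simp: alg_carrier_def ubasis_def)

lemma iso_invariant:
  assumes G: "graded_iso p q p' q' \<phi>"
  shows "Sc p q = Sc p' q'"
proof -
  define n where "n = p + q"
  define U where "U = Pow {..<n}"
  have n': "p' + q' = n" using G by (simp add: graded_iso_def n_def)
  have bij: "bij_betw \<phi> (alg_carrier n) (alg_carrier n)" using G n' by (simp add: graded_iso_def n_def)
  have inj: "inj_on \<phi> (alg_carrier n)" using bij by (simp add: bij_betw_def)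
  have sc: "\<And>c a. a \<in> alg_carrier n \<Longrightarrow> \<phi> (\<lambda>z. c * a z) = (\<lambda>z. c * \<phi> a z)"
    using G by (simp add: graded_iso_def n_def)
  have mu: "\<And>a b. a \<in> alg_carrier n \<Longrightarrow> b \<in> alg_carrier n \<Longrightarrow> \<phi> (omult p q a b) = omult p' q' (\<phi> a) (\<phi> b)"
    using G by (simp add: graded_iso_def n_def)
  have ho: "\<And>a. a \<in> alg_carrier n \<Longrightarrow> homogeneous n a \<Longrightarrow> homogeneous n (\<phi> a)"
    using G n' by (simp add: graded_iso_def n_def)
  have ubC: "ubasis x \<in> alg_carrier n" if "x \<in> U" for x using that ubasis_carrier by (simp add: U_def)
  have "\<forall>x\<in>U. \<exists>c y. y \<subseteq> {..<n} \<and> \<phi> (ubasis x) = (\<lambda>z. c * ubasis y z)"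
  proof
    fix x assume "x \<in> U"
    have "homogeneous n (ubasis x)" unfolding homogeneous_def
      using \<open>x \<in> U\<close> by (intro exI[of _ 1] exI[of _ x]) (auto simp: U_def)
    then show "\<exists>c y. y \<subseteq> {..<n} \<and> \<phi> (ubasis x) = (\<lambda>z. c * ubasis y z)"
      using ho[OF ubC[OF \<open>x \<in> U\<close>]] unfolding homogeneous_def by blast
  qed
  then obtain cf \<sigma> where cs: "\<And>x. x \<in> U \<Longrightarrow> \<sigma> x \<subseteq> {..<n} \<and> \<phi> (ubasis x) = (\<lambda>z. cf x * ubasis (\<sigma> x) z)"
    by metis
  have sU: "\<sigma> x \<in> U" if "x \<in> U" for x using cs[OF that] by (simp add: U_def)
  have zC: "(\<lambda>z. 0::real) \<in> alg_carrier n" by (simp add: alg_carrier_def)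
  have phi0: "\<phi> (\<lambda>z. 0) = (\<lambda>z. 0)"
    using sc[OF zC, of 0] by simp
  have cf0: "cf x \<noteq> 0" if "x \<in> U" for x
  proof
    assume "cf x = 0"
    then have "\<phi> (ubasis x) = \<phi> (\<lambda>z. 0)" using cs[OF that] phi0 by simp
    then have "ubasis x = (\<lambda>z. 0)" using inj ubC[OF that] zC by (meson inj_onD)
    then show False by (metis ubasis_def zero_neq_one)
  qed
  have scb: "\<phi> (\<lambda>z. d * ubasis x z) = (\<lambda>z. (d * cf x) * ubasis (\<sigma> x) z)" if "x \<in> U" for x d
    using sc[OF ubC[OF that], of d] cs[OF that] by (simp add: mult.assoc)
  have injs: "inj_on \<sigma> U"
  proof (rule inj_onI)
    fix x y assume x: "x \<in> U" and y: "y \<in> U" and e: "\<sigma> x = \<sigma> y"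
    show "x = y"
    proof (rule ccontr)
      assume ne: "x \<noteq> y"
      have a: "(\<lambda>z. cf y * ubasis x z) \<in> alg_carrier n" "(\<lambda>z. cf x * ubasis y z) \<in> alg_carrier n"
        using x y by (auto simp: alg_carrier_def ubasis_def U_def)
      have "\<phi> (\<lambda>z. cf y * ubasis x z) = \<phi> (\<lambda>z. cf x * ubasis y z)"
        using scb[OF x, of "cf y"] scb[OF y, of "cf x"] e by (simp add: mult.commute)
      then have "(\<lambda>z. cf y * ubasis x z) = (\<lambda>z. cf x * ubasis y z)" using inj a by (meson inj_onD)
      then have "cf y * ubasis x x = cf x * ubasis y x" by metis
      then show False using ne cf0[OF y] by (simp add: ubasis_def)
    qed
  qed
  have finU: "finite U" by (simp add: U_def)
  have bs: "bij_betw \<sigma> U U"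
    using endo_inj_surj[OF finU _ injs] sU injs by (auto simp: bij_betw_def)
  have eU: "{} \<in> U" by (simp add: U_def)
  have u0: "omult p q (ubasis {}) (ubasis {}) = ubasis {}"
    using basis_mult[of "{}" p q "{}" 1 1] by (simp add: fO_empty zadd_empty)
  have s0: "\<sigma> {} = {} \<and> cf {} = 1"
  proof -
    have "\<phi> (ubasis {}) = omult p' q' (\<phi> (ubasis {})) (\<phi> (ubasis {}))"
      using mu[OF ubC[OF eU] ubC[OF eU]] u0 by simp
    also have "\<dots> = omult p' q' (\<lambda>z. cf {} * ubasis (\<sigma> {}) z) (\<lambda>z. cf {} * ubasis (\<sigma> {}) z)"
      using cs[OF eU] by simp
    also have "\<dots> = (\<lambda>z. (cf {} * cf {} * (-1)^fO p' q' (\<sigma> {}) (\<sigma> {})) * ubasis {} z)"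
      using basis_mult[of "\<sigma> {}" p' q' "\<sigma> {}"] cs[OF eU] n' by (simp add: zadd_self)
    finally have E: "(\<lambda>z. cf {} * ubasis (\<sigma> {}) z) = (\<lambda>z. (cf {} * cf {} * (-1)^fO p' q' (\<sigma> {}) (\<sigma> {})) * ubasis {} z)"
      using cs[OF eU] by simp
    have "\<sigma> {} = {}"
    proof (rule ccontr)
      assume "\<sigma> {} \<noteq> {}"
      then have "cf {} * ubasis (\<sigma> {}) (\<sigma> {}) = 0" using fun_cong[OF E, of "\<sigma> {}"] by (simp add: ubasis_def)
      then show False using cf0[OF eU] by (simp add: ubasis_def)
    qed
    moreover then have "cf {} = cf {} * cf {}" using fun_cong[OF E, of "{}"] by (simp add: ubasis_def fO_empty)
    ultimately show ?thesis using cf0[OF eU] by simp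
  qed
  have par: "even (fO p q x x) = even (fO p' q' (\<sigma> x) (\<sigma> x))" if x: "x \<in> U" for x
  proof -
    have xs: "x \<subseteq> {..<p+q}" using x by (simp add: U_def n_def)
    have sq: "omult p q (ubasis x) (ubasis x) = (\<lambda>z. (-1)^fO p q x x * ubasis {} z)"
      using basis_mult[OF xs xs, of 1 1] by (simp add: zadd_self)
    have L: "\<phi> (omult p q (ubasis x) (ubasis x)) = (\<lambda>z. (-1)^fO p q x x * ubasis {} z)"
      unfolding sq using sc[OF ubC[OF eU], of "(-1)^fO p q x x"] cs[OF eU] s0 by simp
    have R: "\<phi> (omult p q (ubasis x) (ubasis x)) = (\<lambda>z. (cf x * cf x * (-1)^fO p' q' (\<sigma> x) (\<sigma> x)) * ubasis {} z)"
      using mu[OF ubC[OF x] ubC[OF x]] cs[OF x] basis_mult[of "\<sigma> x" p' q' "\<sigma> x"] n' by (simp add: zadd_self)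
    have E: "(-1::real)^fO p q x x = cf x * cf x * (-1)^fO p' q' (\<sigma> x) (\<sigma> x)"
      using fun_cong[OF trans[OF L[symmetric] R], of "{}"] by (simp add: ubasis_def)
    have pos: "cf x * cf x > 0" using cf0[OF x] by (auto simp: zero_less_mult_iff linorder_neq_iff)
    show ?thesis
    proof (rule ccontr)
      assume "even (fO p q x x) \<noteq> even (fO p' q' (\<sigma> x) (\<sigma> x))"
      then have "(-1::real)^fO p q x x = - ((-1)^fO p' q' (\<sigma> x) (\<sigma> x))"
        by (auto simp: minus_one_power_iff)
      then have "- ((-1::real)^fO p' q' (\<sigma> x) (\<sigma> x)) = cf x * cf x * (-1)^fO p' q' (\<sigma> x) (\<sigma> x)"
        using E by simp
      then show False using pos by (cases "even (fO p' q' (\<sigma> x) (\<sigma> x))") (auto simp: minus_one_power_iff)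
    qed
  qed
  have "Sc p' q' = (\<Sum>y\<in>U. (-1::complex)^(fO p' q' y y))" by (simp add: Sc_def U_def n')
  also have "\<dots> = (\<Sum>x\<in>U. (-1::complex)^(fO p' q' (\<sigma> x) (\<sigma> x)))"
    by (rule sum.reindex_bij_betw[OF bs, symmetric])
  also have "\<dots> = (\<Sum>x\<in>U. (-1::complex)^(fO p q x x))"
    by (intro sum.cong refl) (use par in \<open>simp add: minus_one_power_iff\<close>)
  also have "\<dots> = Sc p q" by (simp add: Sc_def U_def n_def)
  finally show ?thesis by simp
qed



lemma choose2_mod4: "odd (k choose 2) \<longleftrightarrow> (k mod 4 = 2 \<or> k mod 4 = 3)"
proof (induction k)
  case 0 then show ?case by (simp add: numeral_2_eq_2)
next
  case (Suc k)
  have e: "odd (Suc k choose 2) = (odd (k choose 2) \<noteq> odd k)" by (simp add: choose2_Suc)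
  show ?case unfolding e Suc.IH by presburger
qed

lemma two_choose2: "2 * (k choose 2) + k = k * k"
  by (induction k) (simp_all add: choose2_Suc algebra_simps numeral_2_eq_2)

lemma Lr_diag: "finite x \<Longrightarrow> odd (Lr x x) = (o2 x \<noteq> o1 x)"
proof -
  assume f: "finite x"
  have "Lr x x + Lr x x = card x * card x + card x" using Lr_swap_sum[OF f f] by simp
  also have "\<dots> = 2 * ((card x choose 2) + card x)" using two_choose2[of "card x"] by simp
  finally have "Lr x x = (card x choose 2) + card x" by simp
  then show ?thesis by (simp add: o1_def o2_def)
qed

lemma diag_parity:
  assumes x: "x \<subseteq> {..<p+q}"
  shows "odd (fO p q x x) = ((card x mod 4 = 2) \<noteq> odd (card (x \<inter> {p..<p+q})))"
proof -
  have f: "finite x" using x finite_subset by blast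
  have a: "odd (fO p q x x) = (((o2 x \<and> o1 x) \<noteq> odd (Lr x x)) \<noteq> o1 (x \<inter> {..<p}))"
    using fO_parity[OF x x] by auto
  have b: "o1 x = (o1 (x \<inter> {..<p}) \<noteq> o1 (x \<inter> {p..<p+q}))"
  proof -
    have "x - {..<p} = x \<inter> {p..<p+q}" using x by auto
    then have "card x = card (x \<inter> {p..<p+q}) + card (x \<inter> {..<p})" using card_split[OF f, of "{..<p}"] by simp
    then show ?thesis unfolding o1_def by auto
  qed
  have c: "(card x mod 4 = 2) = (o2 x \<and> \<not> o1 x)"
    unfolding o2_def o1_def choose2_mod4 by presburger
  show ?thesis using a b c Lr_diag[OF f] by (auto simp: o1_def)
qed

definition cw :: "nat \<Rightarrow> complex" where
  "cw k = (1 + \<i>^k - (-1)^k + (-\<i>)^k) / 2"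

lemma pow_mod4: "(z::complex)^4 = 1 \<Longrightarrow> z^k = z^(k mod 4)"
proof -
  assume z: "z^4 = 1"
  have e: "4 * (k div 4) + k mod 4 = k" by simp
  have "(z^4)^(k div 4) * z^(k mod 4) = z^(4 * (k div 4) + k mod 4)" by (simp only: power_add power_mult)
  then have "z^k = (z^4)^(k div 4) * z^(k mod 4)" unfolding e by simp
  then show ?thesis using z by simp
qed

lemma cw_val: "cw k = (if k mod 4 = 2 then -1 else 1)"
proof -
  have i4: "\<i>^4 = 1" by (simp add: power4_eq_xxxx)
  have mi4: "(-\<i>)^4 = 1" by (simp add: power4_eq_xxxx)
  have m4: "(-1::complex)^4 = 1" by simp
  have "k mod 4 < 4" by simp
  then have "k mod 4 = 0 \<or> k mod 4 = 1 \<or> k mod 4 = 2 \<or> k mod 4 = 3" by arith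
  then show ?thesis unfolding cw_def pow_mod4[OF i4, of k] pow_mod4[OF mi4, of k] pow_mod4[OF m4, of k]
    by (elim disjE) (simp_all add: numeral_3_eq_3 numeral_2_eq_2 complex_eq_iff)
qed

lemma sign_diag:
  assumes x: "x \<subseteq> {..<p+q}"
  shows "(-1::complex)^(fO p q x x) = cw (card x) * (-1)^(card (x \<inter> {p..<p+q}))"
  using diag_parity[OF x] unfolding cw_val
  by (auto simp: minus_one_power_iff)

lemma G_sum:
  fixes z :: complex
  shows "(\<Sum>x\<in>Pow {..<p+q}. z^(card x) * (-1)^(card (x \<inter> {p..<p+q}))) = (1+z)^p * (1-z)^q"
proof -
  define Q where "Q = {p..<p+q}"
  define f where "f i = (if i \<in> Q then -z else z)" for i
  have pr: "(\<Prod>i\<in>X. f i) = z^(card X) * (-1)^(card (X \<inter> Q))" if "X \<subseteq> {..<p+q}" for X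
  proof -
    have fX: "finite X" using that finite_subset by blast
    have "(\<Prod>i\<in>X. f i) = (-z)^(card (X \<inter> Q)) * z^(card (X - Q))"
      unfolding f_def by (simp add: prod.If_cases fX Diff_eq Int_def)
    also have "\<dots> = z^(card (X \<inter> Q) + card (X - Q)) * (-1)^(card (X \<inter> Q))"
      by (simp add: power_add power_mult_distrib[symmetric] algebra_simps)
    also have "card (X \<inter> Q) + card (X - Q) = card X" using card_split[OF fX, of Q] by simp
    finally show ?thesis .
  qed
  have "(\<Prod>i\<in>{..<p+q}. f i + 1) = (\<Sum>X\<in>Pow {..<p+q}. (\<Prod>i\<in>X. f i) * (\<Prod>i\<in>{..<p+q}-X. 1))"
    by (rule prod_add) simp
  also have "\<dots> = (\<Sum>X\<in>Pow {..<p+q}. z^(card X) * (-1)^(card (X \<inter> Q)))"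
    by (intro sum.cong refl) (simp add: pr)
  finally have e1: "(\<Sum>X\<in>Pow {..<p+q}. z^(card X) * (-1)^(card (X \<inter> Q))) = (\<Prod>i\<in>{..<p+q}. f i + 1)" by simp
  have "(\<Prod>i\<in>{..<p+q}. f i + 1) = (\<Prod>i\<in>{..<p+q}. if i \<in> Q then 1 - z else 1 + z)"
    by (intro prod.cong refl) (simp add: f_def)
  also have "\<dots> = (1 - z)^(card ({..<p+q} \<inter> Q)) * (1 + z)^(card ({..<p+q} - Q))"
    by (simp add: prod.If_cases Diff_eq Int_def)
  also have "{..<p+q} \<inter> Q = Q" by (auto simp: Q_def)
  also have "{..<p+q} - Q = {..<p}" by (auto simp: Q_def)
  finally show ?thesis using e1 by (simp add: Q_def mult.commute)
qed

lemma Sc_formula: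
  "Sc p q = (2^p * 0^q + (1+\<i>)^p * (1-\<i>)^q - 0^p * 2^q + (1-\<i>)^p * (1+\<i>)^q) / 2"
proof -
  define Q where "Q = {p..<p+q}"
  let ?U = "Pow {..<p+q}"
  have "Sc p q = (\<Sum>x\<in>?U. cw (card x) * (-1)^(card (x \<inter> Q)))"
    unfolding Sc_def Q_def by (intro sum.cong refl) (simp add: sign_diag)
  also have "\<dots> = (\<Sum>x\<in>?U. ((1::complex)^(card x) * (-1)^(card (x \<inter> Q)) + \<i>^(card x) * (-1)^(card (x \<inter> Q))
        - (-1)^(card x) * (-1)^(card (x \<inter> Q)) + (-\<i>)^(card x) * (-1)^(card (x \<inter> Q))) / 2)"
    unfolding cw_def by (intro sum.cong refl) (simp add: algebra_simps)
  also have "\<dots> = ((\<Sum>x\<in>?U. (1::complex)^(card x) * (-1)^(card (x \<inter> Q))) + (\<Sum>x\<in>?U. \<i>^(card x) * (-1)^(card (x \<inter> Q)))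
        - (\<Sum>x\<in>?U. (-1)^(card x) * (-1)^(card (x \<inter> Q))) + (\<Sum>x\<in>?U. (-\<i>)^(card x) * (-1)^(card (x \<inter> Q)))) / 2"
    by (simp add: sum_divide_distrib[symmetric] sum.distrib sum_subtractf)
  also have "\<dots> = ((1+1)^p * (1-1)^q + (1+\<i>)^p * (1-\<i>)^q - (1 + -1)^p * (1 - -1)^q + (1 + -\<i>)^p * (1 - -\<i>)^q) / 2"
    unfolding Q_def G_sum by simp
  finally show ?thesis by simp
qed



lemma one_minus_i: "(1 - \<i>)^k = (-\<i>)^k * (1 + \<i>)^k"
proof -
  have e: "1 - \<i> = (-\<i>) * (1 + \<i>)" by (simp add: algebra_simps)
  show ?thesis unfolding e by (rule power_mult_distrib)
qed

lemma Sc_mixed: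
  assumes "1 \<le> p" "1 \<le> q"
  shows "Sc p q = (1 + \<i>)^(p+q) * ((-\<i>)^q + (-\<i>)^p) / 2"
proof -
  have "Sc p q = ((1+\<i>)^p * (1-\<i>)^q + (1-\<i>)^p * (1+\<i>)^q) / 2"
    using assms by (simp add: Sc_formula power_0_left)
  also have "\<dots> = (1 + \<i>)^(p+q) * ((-\<i>)^q + (-\<i>)^p) / 2"
    unfolding one_minus_i by (simp add: power_add algebra_simps)
  finally show ?thesis .
qed

definition wq :: "nat \<Rightarrow> complex" where "wq k = (-\<i>)^k"

lemma wq_mod: "wq k = wq (k mod 4)"
  unfolding wq_def by (rule pow_mod4) (simp add: power4_eq_xxxx)

lemma fin_check:
  assumes "s < 4" "a < 4" "a' < 4"
    and "wq a + wq ((s + 4 - a) mod 4) = wq a' + wq ((s + 4 - a') mod 4)"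
  shows "a' = a \<or> a' = (s + 4 - a) mod 4"
proof -
  have r: "k < 4 \<Longrightarrow> k = 0 \<or> k = 1 \<or> k = 2 \<or> k = 3" for k :: nat by arith
  have w: "wq 0 = 1" "wq 1 = -\<i>" "wq (Suc 0) = -\<i>" "wq 2 = -1" "wq 3 = \<i>"
    by (simp_all add: wq_def numeral_3_eq_3 numeral_2_eq_2)
  from r[OF assms(1)] r[OF assms(2)] r[OF assms(3)] assms(4) show ?thesis
    by (elim disjE) (simp_all add: w complex_eq_iff)
qed

lemma mod4_aux: "(q::nat) mod 4 = ((p + q) mod 4 + 4 - p mod 4) mod 4"
proof -
  have r: "k < 4 \<Longrightarrow> k = 0 \<or> k = 1 \<or> k = 2 \<or> k = 3" for k :: nat by arith
  have e: "(p + q) mod 4 = (p mod 4 + q mod 4) mod 4" by (simp add: mod_add_eq)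
  have a: "p mod 4 = 0 \<or> p mod 4 = 1 \<or> p mod 4 = 2 \<or> p mod 4 = 3" using r[of "p mod 4"] by simp
  have b: "q mod 4 = 0 \<or> q mod 4 = 1 \<or> q mod 4 = 2 \<or> q mod 4 = 3" using r[of "q mod 4"] by simp
  show ?thesis unfolding e using a b by (elim disjE) simp_all
qed

lemma resid:
  assumes p: "1 \<le> p" and q: "1 \<le> q" and p': "1 \<le> p'" and q': "1 \<le> q'"
    and n: "p + q = p' + q'" and S: "Sc p q = Sc p' q'"
  shows "p' mod 4 = p mod 4 \<or> p' mod 4 = q mod 4"
proof -
  have "1 + \<i> \<noteq> (0::complex)" by (simp add: complex_eq_iff)
  then have nz: "(1 + \<i>)^(p+q) \<noteq> 0" by simp
  have nz2: "\<i> + 1 \<noteq> (0::complex)" by (simp add: complex_eq_iff)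
  have "(1 + \<i>)^(p+q) * ((-\<i>)^q + (-\<i>)^p) / 2 = (1 + \<i>)^(p+q) * ((-\<i>)^q' + (-\<i>)^p') / 2"
    using S Sc_mixed[OF p q] Sc_mixed[OF p' q'] n by simp
  then have E: "wq p + wq q = wq p' + wq q'" using nz nz2 by (simp add: wq_def add.commute)
  define s where "s = (p + q) mod 4"
  have bq: "q mod 4 = (s + 4 - p mod 4) mod 4" unfolding s_def by (rule mod4_aux)
  have bq': "q' mod 4 = (s + 4 - p' mod 4) mod 4" unfolding s_def n by (rule mod4_aux)
  have "wq (p mod 4) + wq ((s + 4 - p mod 4) mod 4) = wq (p' mod 4) + wq ((s + 4 - p' mod 4) mod 4)"
    using E wq_mod[of p] wq_mod[of q] wq_mod[of p'] wq_mod[of q'] bq bq' by simp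
  then have "p' mod 4 = p mod 4 \<or> p' mod 4 = (s + 4 - p mod 4) mod 4"
    by (intro fin_check) (simp_all add: s_def)
  then show ?thesis using bq by simp
qed

lemma cmod_1i: "cmod (1 + \<i>) = sqrt 2" "cmod (1 - \<i>) = sqrt 2"
  by (simp_all add: cmod_def)

lemma big_bound:
  assumes "5 \<le> n"
  shows "4 * sqrt 2 ^ n < (2::real)^n"
proof -
  have s1: "1 \<le> sqrt (2::real)" by simp
  have "sqrt 2 ^ 5 \<le> sqrt (2::real) ^ n" by (rule power_increasing[OF assms s1])
  moreover have "sqrt (2::real) ^ 5 = 4 * sqrt 2"
    by (simp add: power_def numeral_eq_Suc algebra_simps)
  moreover have "4 < 4 * sqrt (2::real)" by simp
  ultimately have a: "4 < sqrt (2::real) ^ n" by linarith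
  have b: "(2::real)^n = sqrt 2 ^ n * sqrt 2 ^ n"
    by (simp flip: power_mult_distrib)
  have "0 < sqrt (2::real) ^ n" by simp
  then show ?thesis using a b by (simp add: mult_strict_right_mono)
qed

lemma Sc_n0: "1 \<le> n \<Longrightarrow> Sc n 0 = (2^n + (1+\<i>)^n + (1-\<i>)^n) / 2"
  by (simp add: Sc_formula power_0_left)

lemma Sc_0n: "1 \<le> n \<Longrightarrow> Sc 0 n = (- (2^n) + (1+\<i>)^n + (1-\<i>)^n) / 2"
  by (simp add: Sc_formula power_0_left algebra_simps)

lemma norm_mixed:
  "cmod ((1+\<i>)^p * (1-\<i>)^q) = sqrt 2 ^ (p+q)" "cmod ((1-\<i>)^p * (1+\<i>)^q) = sqrt 2 ^ (p+q)"
  by (simp_all add: norm_mult norm_power cmod_1i power_add)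

lemma extreme_ne:
  assumes n: "5 \<le> n" and p: "1 \<le> p" and q: "1 \<le> q" and pq: "p + q = n"
  shows "Sc n 0 \<noteq> Sc p q" "Sc 0 n \<noteq> Sc p q" "Sc n 0 \<noteq> Sc 0 n"
proof -
  define A where "A = (1+\<i>)^p * (1-\<i>)^q"
  define B where "B = (1-\<i>)^p * (1+\<i>)^q"
  define C where "C = (1+\<i>)^n"
  define D where "D = (1-\<i>)^n"
  have M: "Sc p q = (A + B) / 2" using p q by (simp add: Sc_formula A_def B_def power_0_left)
  have n1: "1 \<le> n" using n by simp
  have nA: "cmod A = sqrt 2 ^ n" "cmod B = sqrt 2 ^ n" using norm_mixed pq by (simp_all add: A_def B_def)
  have nC: "cmod C = sqrt 2 ^ n" "cmod D = sqrt 2 ^ n" by (simp_all add: C_def D_def norm_power cmod_1i)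
  have bd: "cmod (A + B - C - D) \<le> 4 * sqrt 2 ^ n"
  proof -
    have t1: "cmod (A + B - C - D) \<le> cmod (A + B - C) + cmod D" by (rule norm_triangle_ineq4)
    have t2: "cmod (A + B - C) \<le> cmod (A + B) + cmod C" by (rule norm_triangle_ineq4)
    have t3: "cmod (A + B) \<le> cmod A + cmod B" by (rule norm_triangle_ineq)
    have "cmod (A + B - C - D) \<le> cmod A + cmod B + cmod C + cmod D" using t1 t2 t3 by linarith
    then show ?thesis using nA nC by simp
  qed
  have big: "4 * sqrt 2 ^ n < (2::real)^n" by (rule big_bound[OF n])
  show "Sc n 0 \<noteq> Sc p q"
  proof
    assume "Sc n 0 = Sc p q"
    then have "(2^n + C + D) / 2 = (A + B) / 2" using Sc_n0[OF n1] M by (simp add: C_def D_def)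
    then have "2^n + C + D = A + B" by (simp only: divide_cancel_right) simp
    then have "(2::complex)^n = A + B - C - D" by (simp add: algebra_simps)
    then have "cmod ((2::complex)^n) \<le> 4 * sqrt 2 ^ n" using bd by simp
    then show False using big by (simp add: norm_power)
  qed
  show "Sc 0 n \<noteq> Sc p q"
  proof
    assume "Sc 0 n = Sc p q"
    then have "(- (2^n) + C + D) / 2 = (A + B) / 2" using Sc_0n[OF n1] M by (simp add: C_def D_def)
    then have "- (2^n) + C + D = A + B" by (simp only: divide_cancel_right) simp
    then have "- ((2::complex)^n) = A + B - C - D" by (simp add: algebra_simps)
    then have "cmod (- ((2::complex)^n)) \<le> 4 * sqrt 2 ^ n" using bd by simp
    then show False using big by (simp add: norm_power)
  qed
  show "Sc n 0 \<noteq> Sc 0 n"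
  proof
    assume "Sc n 0 = Sc 0 n"
    moreover have "(2^n + C + D) / 2 - (- (2^n) + C + D) / 2 = (2::complex)^n"
      by (simp add: field_simps)
    ultimately have "(2::complex)^n = 0" using Sc_n0[OF n1] Sc_0n[OF n1] by (simp add: C_def D_def)
    then show False by simp
  qed
qed



lemma oct_sym: "oct_move u w \<Longrightarrow> oct_move w u"
  by (cases u; cases w) (auto simp: oct_move_def)

lemma rt_sym: "oct_move\<^sup>*\<^sup>* u w \<Longrightarrow> oct_move\<^sup>*\<^sup>* w u"
proof (induction rule: rtranclp_induct)
  case base then show ?case by simp
next
  case (step y z)
  then show ?case using oct_sym[OF step(2)] by (meson converse_rtranclp_into_rtranclp)
qed

lemma m1: "1 \<le> (p::nat) \<Longrightarrow> (p - 1) mod 4 = (p mod 4 + 3) mod 4"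
proof -
  assume "1 \<le> p"
  then have "p + 3 = (p - 1) + 4" by simp
  then have "(p - 1) mod 4 = (p + 3) mod 4" by (metis mod_add_self2)
  also have "\<dots> = (p mod 4 + 3) mod 4" by (simp add: mod_add_left_eq)
  finally show ?thesis .
qed

lemma down: "1 \<le> p \<Longrightarrow> 1 \<le> q \<Longrightarrow> oct_move\<^sup>*\<^sup>* (p, q) ((p - 1) mod 4 + 1, q + p - ((p - 1) mod 4 + 1))"
proof (induction p arbitrary: q rule: less_induct)
  case (less p)
  show ?case
  proof (cases "p \<le> 4")
    case True
    then have "(p - 1) mod 4 + 1 = p" using less.prems by simp
    then show ?thesis by simp
  next
    case False
    have m: "oct_move (p, q) (p - 4, q + 4)" using False less.prems by (simp add: oct_move_def)
    have IH: "oct_move\<^sup>*\<^sup>* (p - 4, q + 4) ((p - 4 - 1) mod 4 + 1, q + 4 + (p - 4) - ((p - 4 - 1) mod 4 + 1))"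
      using less.IH[of "p - 4" "q + 4"] False by simp
    have "p - 1 = (p - 4 - 1) + 4" using False by simp
    then have e1: "(p - 4 - 1) mod 4 = (p - 1) mod 4" by (metis mod_add_self2)
    have e2: "q + 4 + (p - 4) = q + p" using False by simp
    show ?thesis using m IH unfolding e1 e2 by (meson converse_rtranclp_into_rtranclp)
  qed
qed

lemma reach_same:
  assumes "1 \<le> p" "1 \<le> q" "1 \<le> p'" "1 \<le> q'" "p + q = p' + q'" "p' mod 4 = p mod 4"
  shows "oct_move\<^sup>*\<^sup>* (p, q) (p', q')"
proof -
  have r: "(p - 1) mod 4 = (p' - 1) mod 4" using assms m1[of p] m1[of p'] by simp
  have a: "oct_move\<^sup>*\<^sup>* (p, q) ((p - 1) mod 4 + 1, q + p - ((p - 1) mod 4 + 1))" using down assms by simp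
  have b: "oct_move\<^sup>*\<^sup>* (p', q') ((p - 1) mod 4 + 1, q + p - ((p - 1) mod 4 + 1))"
    using down[of p' q'] assms r by (simp add: add.commute)
  show ?thesis using a rt_sym[OF b] by simp
qed

lemma reach:
  assumes "1 \<le> p" "1 \<le> q" "1 \<le> p'" "1 \<le> q'" "p + q = p' + q'" "p' mod 4 = p mod 4 \<or> p' mod 4 = q mod 4"
  shows "oct_move\<^sup>*\<^sup>* (p, q) (p', q')"
  using assms(6)
proof
  assume "p' mod 4 = p mod 4" then show ?thesis using reach_same assms by blast
next
  assume h: "p' mod 4 = q mod 4"
  have m: "oct_move (p, q) (q, p)" using assms by (simp add: oct_move_def)
  have "oct_move\<^sup>*\<^sup>* (q, p) (p', q')" using reach_same[of q p p' q'] assms h by simp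
  then show ?thesis using m by (meson converse_rtranclp_into_rtranclp)
qed

theorem mainTheorem1:
  shows
   "(\<forall>p q. 1 \<le> p \<longrightarrow> 1 \<le> q \<longrightarrow> 3 \<le> p + q \<longrightarrow> graded_isomorphic p q q p)
  \<and> (\<forall>p q. 1 \<le> p \<longrightarrow> 1 \<le> q \<longrightarrow> 3 \<le> p + q \<longrightarrow> graded_isomorphic p (q + 4) (p + 4) q)
  \<and> (\<forall>p q p' q'. 1 \<le> p \<longrightarrow> 1 \<le> q \<longrightarrow> 1 \<le> p' \<longrightarrow> 1 \<le> q' \<longrightarrow> 3 \<le> p + q \<longrightarrow>
        p + q = p' + q' \<longrightarrow> graded_isomorphic p q p' q' \<longrightarrow> oct_move\<^sup>*\<^sup>* (p, q) (p', q'))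
  \<and> (\<forall>n. 5 \<le> n \<longrightarrow>
        \<not> graded_isomorphic n 0 0 n \<and> \<not> graded_isomorphic 0 n n 0 \<and>
        (\<forall>p q. p + q = n \<longrightarrow> (p, q) \<notin> {(n, 0), (0, n)} \<longrightarrow>
           \<not> graded_isomorphic n 0 p q \<and> \<not> graded_isomorphic p q n 0 \<and>
           \<not> graded_isomorphic 0 n p q \<and> \<not> graded_isomorphic p q 0 n))"
proof (intro conjI allI impI)
  fix p q :: nat assume "1 \<le> p" "1 \<le> q"
  then show "graded_isomorphic p q q p" by (rule swap_iso)
next
  fix p q :: nat assume "1 \<le> p" "1 \<le> q"
  then show "graded_isomorphic p (q + 4) (p + 4) q" by (rule shift_iso)
next
  fix p q p' q' :: nat
  assume h: "1 \<le> p" "1 \<le> q" "1 \<le> p'" "1 \<le> q'" "p + q = p' + q'" "graded_isomorphic p q p' q'"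
  then have "Sc p q = Sc p' q'" unfolding graded_isomorphic_def using iso_invariant by blast
  then have "p' mod 4 = p mod 4 \<or> p' mod 4 = q mod 4" using resid h by blast
  then show "oct_move\<^sup>*\<^sup>* (p, q) (p', q')" using reach h by blast
next
  have inv: "graded_isomorphic a b c d \<Longrightarrow> Sc a b = Sc c d" for a b c d
    unfolding graded_isomorphic_def using iso_invariant by blast
  fix n :: nat assume n: "5 \<le> n"
  have n1: "1 \<le> n" "1 \<le> n" using n by simp_all
  have e: "Sc n 0 \<noteq> Sc 0 n"
  proof -
    have "Sc n 0 = (2^n + (1+\<i>)^n + (1-\<i>)^n) / 2" by (rule Sc_n0[OF n1(1)])
    moreover have "Sc 0 n = (- (2^n) + (1+\<i>)^n + (1-\<i>)^n) / 2" by (rule Sc_0n[OF n1(1)])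
    moreover have "(2^n + (1+\<i>)^n + (1-\<i>)^n) / 2 - (- (2^n) + (1+\<i>)^n + (1-\<i>)^n) / 2 = (2::complex)^n"
      by (simp add: field_simps)
    ultimately show ?thesis by auto
  qed
  show "\<not> graded_isomorphic n 0 0 n" using inv e by blast
  show "\<not> graded_isomorphic 0 n n 0" using inv e by metis
  {
    fix p q :: nat assume pq: "p + q = n" "(p, q) \<notin> {(n, 0), (0, n)}"
    then have p: "1 \<le> p" and q: "1 \<le> q" by auto
    note X = extreme_ne[OF n p q pq(1)]
    show "\<not> graded_isomorphic n 0 p q" using inv X by blast
    show "\<not> graded_isomorphic p q n 0" using inv X by metis
    show "\<not> graded_isomorphic 0 n p q" using inv X by blast
    show "\<not> graded_isomorphic p q 0 n" using inv X by metis
  }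
qed


end
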